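(* Suppose $(\Omega,\mathcal{F},\mathsf{P})$ is atomless and $u$ is a law invariant coherent utility on $L^0$ with determining set $\mathcal{D}$. Then for any random variable $X$ and any random vectors $Y,Y'$, $$u^f(X;Y,Y')\le u^f(X;Y),$$ where $u^f(X;Y,Y')$ denotes the factor utility with respect to the compound random vector $(Y,Y')$.
   Context: Let $(\Omega,\mathcal{F},\mathsf{P})$ be a probability space, $L^0$ the space of all real random variables, and $\mathcal{P}$ the set of probability measures on $\mathcal{F}$ absolutely continuous with respect to $\mathsf{P}$; measures $\mathsf{Q}\in\mathcal{P}$ are identified with their densities. For $\mathsf{Q}\in\mathcal{P}$ and $X\in L^0$, $\mathsf{E}_\mathsf{Q}X:=\mathsf{E}_\mathsf{Q}X^+-\mathsf{E}_\mathsf{Q}X^-$ with the convention $\infty-\infty=-\infty$. A coherent utility on $L^0$ is a map $u:L^0\to[-\infty,\infty]$ of the form $u(X)=\inf_{\mathsf{Q}\in\mathcal{D}}\mathsf{E}_\mathsf{Q}X$ for a nonempty $\mathcal{D}\subseteq\mathcal{P}$; its determining set is the largest such set, $\{\mathsf{Q}\in\mathcal{P}:\mathsf{E}_\mathsf{Q}X\ge u(X)\ \forall X\in L^0\}$. $u$ is law invariant if $u(X)=u(X')$ whenever $X,X'$ have the same distribution. For a random vector $Y$, $\mathsf{E}(\mathcal{D}\mid Y):=\{\mathsf{E}(Z\mid Y):Z\in\mathcal{D}\}$ and the factor utility is $u^f(X;Y):=\inf_{\mathsf{Q}\in\mathsf{E}(\mathcal{D}\mid Y)}\mathsf{E}_\mathsf{Q}X$.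 *)

theory Defs
  imports "HOL-Probability.Probability"
begin

definition atomless :: "'a measure \<Rightarrow> bool" where
  "atomless M \<longleftrightarrow> (\<forall>A\<in>sets M. 0 < measure M A \<longrightarrow>
     (\<exists>B\<in>sets M. B \<subseteq> A \<and> 0 < measure M B \<and> measure M B < measure M A))"

definition densities :: "'a measure \<Rightarrow> ('a \<Rightarrow> real) set" where
  "densities M = {Z. Z \<in> borel_measurable M \<and> (AE \<omega> in M. 0 \<le> Z \<omega>)
                     \<and> integrable M Z \<and> integral\<^sup>L M Z = 1}"

text \<open>E_Q X = E_Q X^+ - E_Q X^-, with the convention infinity - infinity = -infinity.\<close>
definition EQ :: "'a measure \<Rightarrow> ('a \<Rightarrow> real) \<Rightarrow> ('a \<Rightarrow> real) \<Rightarrow> ereal" where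
  "EQ M Z X =
     (let p = enn2ereal (\<integral>\<^sup>+ \<omega>. ennreal (Z \<omega> * max (X \<omega>) 0) \<partial>M);
          n = enn2ereal (\<integral>\<^sup>+ \<omega>. ennreal (Z \<omega> * max (- X \<omega>) 0) \<partial>M)
      in if n = \<infinity> then - \<infinity> else p - n)"

definition coherent_utility :: "'a measure \<Rightarrow> (('a \<Rightarrow> real) \<Rightarrow> ereal) \<Rightarrow> bool" where
  "coherent_utility M u \<longleftrightarrow> (\<exists>D0. D0 \<noteq> {} \<and> D0 \<subseteq> densities M \<and>
     (\<forall>X\<in>borel_measurable M. u X = (INF Z\<in>D0. EQ M Z X)))"

definition determining_set :: "'a measure \<Rightarrow> (('a \<Rightarrow> real) \<Rightarrow> ereal) \<Rightarrow> ('a \<Rightarrow> real) set" where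
  "determining_set M u = {Z\<in>densities M. \<forall>X\<in>borel_measurable M. EQ M Z X \<ge> u X}"

definition law_invariant :: "'a measure \<Rightarrow> (('a \<Rightarrow> real) \<Rightarrow> ereal) \<Rightarrow> bool" where
  "law_invariant M u \<longleftrightarrow> (\<forall>X\<in>borel_measurable M. \<forall>X'\<in>borel_measurable M.
     distr M borel X = distr M borel X' \<longrightarrow> u X = u X')"

definition gen_sigma :: "'a measure \<Rightarrow> ('a \<Rightarrow> 'b::topological_space) \<Rightarrow> 'a measure" where
  "gen_sigma M Y = vimage_algebra (space M) Y borel"

definition factor_utility :: "'a measure \<Rightarrow> ('a \<Rightarrow> real) set \<Rightarrow> ('a \<Rightarrow> real)
    \<Rightarrow> ('a \<Rightarrow> 'b::topological_space) \<Rightarrow> ereal" where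
  "factor_utility M D X Y = (INF Q\<in>(\<lambda>Z. real_cond_exp M (gen_sigma M Y) Z) ` D. EQ M Q X)"

end

theory Submission
  imports Defs "HOL-Probability.Probability"
begin

lemma small_subset:
  assumes P: "prob_space M"
    and atl: "\<forall>A\<in>sets M. 0 < measure M A \<longrightarrow>
     (\<exists>B\<in>sets M. B \<subseteq> A \<and> 0 < measure M B \<and> measure M B < measure M A)"
    and A: "A \<in> sets M" "0 < measure M A" and e: "0 < e"
  shows "\<exists>B\<in>sets M. B \<subseteq> A \<and> 0 < measure M B \<and> measure M B < e"
proof -
  interpret prob_space M by fact
  have *: "\<exists>B\<in>sets M. B \<subseteq> A \<and> 0 < measure M B \<and> measure M B \<le> measure M A / 2^n" for n
  proof (induction n)
    case 0 then show ?case using A by auto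
  next
    case (Suc n)
    then obtain B where B: "B \<in> sets M" "B \<subseteq> A" "0 < measure M B" "measure M B \<le> measure M A / 2^n" by blast
    then obtain C where C: "C \<in> sets M" "C \<subseteq> B" "0 < measure M C" "measure M C < measure M B"
      using atl by blast
    have d: "measure M (B - C) = measure M B - measure M C"
      using C B by (simp add: finite_measure_Diff)
    show ?case
    proof (cases "measure M C \<le> measure M B / 2")
      case True then show ?thesis using C B by (intro bexI[of _ C]) auto
    next
      case False then show ?thesis using C B d by (intro bexI[of _ "B - C"]) auto
    qed
  qed
  obtain n where "measure M A / 2^n < e"
  proof -
    obtain n where "measure M A / e < 2^n" using real_arch_pow[of 2 "measure M A / e"] by auto
    then have "measure M A / 2^n < e" using e by (simp add: field_simps)
    then show ?thesis using that by blast
  qed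
  from *[of n] obtain B where "B \<in> sets M" "B \<subseteq> A" "0 < measure M B" "measure M B \<le> measure M A / 2^n" by blast
  with \<open>measure M A / 2^n < e\<close> show ?thesis by (intro bexI[of _ B]) auto
qed

lemma atomless_target:
  assumes P: "prob_space M"
    and atl: "\<forall>A\<in>sets M. 0 < measure M A \<longrightarrow>
     (\<exists>B\<in>sets M. B \<subseteq> A \<and> 0 < measure M B \<and> measure M B < measure M A)"
    and A: "A \<in> sets M" and t: "0 \<le> t" "t \<le> measure M A"
  shows "\<exists>C\<in>sets M. C \<subseteq> A \<and> measure M C = t"
proof -
  interpret prob_space M by fact
  define adm where "adm C = {E\<in>sets M. E \<subseteq> A - C \<and> measure M C + measure M E \<le> t}" for C
  define sp where "sp C = (SUP E\<in>adm C. measure M E)" for C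
  define stp where "stp C = C \<union> (SOME E. E \<in> adm C \<and> sp C / 2 \<le> measure M E)" for C
  have bdd: "bdd_above ((\<lambda>E. measure M E) ` adm C)" for C
    by (rule bdd_aboveI[of _ 1]) auto
  have ex: "\<exists>E. E \<in> adm C \<and> sp C / 2 \<le> measure M E" if "measure M C \<le> t" for C
  proof -
    have e0: "{} \<in> adm C" using that by (auto simp: adm_def)
    have sp0: "0 \<le> sp C" unfolding sp_def
      using cSUP_upper[OF e0 bdd] by simp
    show ?thesis
    proof (cases "sp C = 0")
      case True then show ?thesis using e0 by auto
    next
      case False
      then have "sp C / 2 < sp C" using sp0 by auto
      then obtain E where "E \<in> adm C" "sp C / 2 < measure M E"
        unfolding sp_def using less_cSUP_iff[OF _ bdd] e0 by blast
      then show ?thesis by (intro exI[of _ E]) auto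
    qed
  qed
  define C where "C n = (stp ^^ n) {}" for n
  define E where "E n = (SOME E. E \<in> adm (C n) \<and> sp (C n) / 2 \<le> measure M E)" for n
  have CS: "C (Suc n) = C n \<union> E n" for n by (simp add: C_def E_def stp_def)
  have inv: "C n \<in> sets M \<and> C n \<subseteq> A \<and> measure M (C n) \<le> t" for n
  proof (induction n)
    case 0 then show ?case using t by (simp add: C_def)
  next
    case (Suc n)
    have "E n \<in> adm (C n) \<and> sp (C n) / 2 \<le> measure M (E n)"
      unfolding E_def by (rule someI_ex) (use ex Suc in blast)
    then have En: "E n \<in> sets M" "E n \<subseteq> A - C n" "measure M (C n) + measure M (E n) \<le> t"
      by (auto simp: adm_def)
    have "measure M (C n \<union> E n) = measure M (C n) + measure M (E n)"
      using En Suc by (intro finite_measure_Union) auto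
    then show ?case using En Suc by (auto simp: CS)
  qed
  have Eprop: "E n \<in> adm (C n) \<and> sp (C n) / 2 \<le> measure M (E n)" for n
    unfolding E_def by (rule someI_ex) (use ex inv in blast)
  have Cmeas: "measure M (C (Suc n)) = measure M (C n) + measure M (E n)" for n
    using Eprop[of n] inv[of n] unfolding CS
    by (intro finite_measure_Union) (auto simp: adm_def)
  have inc: "incseq C" by (rule incseq_SucI) (auto simp: CS)
  define U where "U = (\<Union>n. C n)"
  have U: "U \<in> sets M" "U \<subseteq> A" using inv by (auto simp: U_def)
  have lim: "(\<lambda>n. measure M (C n)) \<longlonglongrightarrow> measure M U"
    unfolding U_def using inv inc by (intro finite_Lim_measure_incseq) auto
  have Ule: "measure M U \<le> t"
    using lim inv by (intro LIMSEQ_le_const2[OF lim]) auto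
  have "measure M U = t"
  proof (rule ccontr)
    assume ne: "measure M U \<noteq> t"
    with Ule have lt: "measure M U < t" by simp
    have "measure M (A - U) = measure M A - measure M U" using U A by (simp add: finite_measure_Diff)
    then have pos: "0 < measure M (A - U)" using lt t by simp
    obtain F where F: "F \<in> sets M" "F \<subseteq> A - U" "0 < measure M F" "measure M F < t - measure M U"
      using small_subset[OF P atl _ pos, of "t - measure M U"] U A lt by auto
    have CleU: "measure M (C n) \<le> measure M U" for n
      using inv U by (intro finite_measure_mono) (auto simp: U_def)
    have Fadm: "F \<in> adm (C n)" for n
      using F CleU[of n] by (auto simp: adm_def U_def)
    have spF: "measure M F \<le> sp (C n)" for n
      unfolding sp_def by (rule cSUP_upper[OF Fadm bdd])
    have Egt: "measure M F / 2 \<le> measure M (E n)" for n using Eprop[of n] spF[of n] by linarith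
    have nC: "real n * (measure M F / 2) \<le> measure M (C n)" for n
    proof (induction n)
      case 0 then show ?case by (simp add: C_def)
    next
      case (Suc n) then show ?case using Cmeas[of n] Egt[of n] by (simp add: algebra_simps)
    qed
    obtain n where "t / (measure M F / 2) < real n"
      using reals_Archimedean2 by blast
    then have "t < real n * (measure M F / 2)" using F by (simp add: field_simps)
    then show False using inv[of n] nC[of n] by linarith
  qed
  then show ?thesis using U by blast
qed

fun tree :: "('a set \<Rightarrow> 'a set) \<Rightarrow> 'a set \<Rightarrow> nat \<Rightarrow> nat \<Rightarrow> 'a set" where
  "tree s A 0 k = (if k = 0 then A else {})"
| "tree s A (Suc n) k = (if even k then s (tree s A n (k div 2)) else tree s A n (k div 2) - s (tree s A n (k div 2)))"

definition cval :: "('a set \<Rightarrow> 'a set) \<Rightarrow> 'a set \<Rightarrow> nat \<Rightarrow> 'a \<Rightarrow> real" where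
  "cval s A n x = (\<Sum>k<2^n. real k / 2^n * indicator (tree s A n k) x)"

definition tv :: "('a set \<Rightarrow> 'a set) \<Rightarrow> 'a set \<Rightarrow> 'a \<Rightarrow> real" where
  "tv s A x = (SUP n. cval s A n x)"

locale splitter =
  fixes M :: "'a measure" and s :: "'a set \<Rightarrow> 'a set" and A :: "'a set"
  assumes s_sets: "\<And>B. B \<in> sets M \<Longrightarrow> s B \<in> sets M"
    and s_sub: "\<And>B. s B \<subseteq> B"
    and A: "A \<in> sets M"
begin

lemma tree_sets: "tree s A n k \<in> sets M"
  by (induction n arbitrary: k) (auto simp: A s_sets)

lemma tree_sub_parent: "tree s A (Suc n) k \<subseteq> tree s A n (k div 2)"
  using s_sub by auto

lemma tree_sub: "tree s A n k \<subseteq> A"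
proof (induction n arbitrary: k)
  case 0 then show ?case by auto
next
  case (Suc n) then show ?case using tree_sub_parent[of n k] by blast
qed

lemma tree_empty: "2^n \<le> k \<Longrightarrow> tree s A n k = {}"
proof (induction n arbitrary: k)
  case 0 then show ?case by auto
next
  case (Suc n)
  then have "2^n \<le> k div 2" by auto
  then have "tree s A n (k div 2) = {}" using Suc by auto
  then show ?case using tree_sub_parent[of n k] by auto
qed

lemma tree_cover: "x \<in> A \<Longrightarrow> \<exists>k<2^n. x \<in> tree s A n k"
proof (induction n)
  case 0 then show ?case by auto
next
  case (Suc n)
  then obtain k where k: "k < 2^n" "x \<in> tree s A n k" by auto
  show ?case
  proof (cases "x \<in> s (tree s A n k)")
    case True
    then have "x \<in> tree s A (Suc n) (2*k)" by simp
    then show ?thesis using k by (intro exI[of _ "2*k"]) auto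
  next
    case False
    then have "x \<in> tree s A (Suc n) (2*k+1)" using k by simp
    then show ?thesis using k by (intro exI[of _ "2*k+1"]) auto
  qed
qed

lemma tree_disj: "x \<in> tree s A n j \<Longrightarrow> x \<in> tree s A n k \<Longrightarrow> j = k"
proof (induction n arbitrary: j k)
  case 0 then show ?case by (auto split: if_splits)
next
  case (Suc n)
  have jk: "j div 2 = k div 2" using Suc tree_sub_parent by blast
  have "even j = even k" using Suc.prems jk by (auto split: if_splits)
  with jk show ?case by (metis dvd_mult_div_cancel odd_two_times_div_two_succ)
qed

definition idx where "idx n x = (THE k. x \<in> tree s A n k)"

lemma idx: "x \<in> A \<Longrightarrow> x \<in> tree s A n (idx n x) \<and> idx n x < 2^n"
proof -
  assume x: "x \<in> A"
  obtain k where k: "k < 2^n" "x \<in> tree s A n k" using tree_cover[OF x] by auto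
  have "idx n x = k" unfolding idx_def using k tree_disj by blast
  then show ?thesis using k by simp
qed

lemma idx_eq: "x \<in> tree s A n k \<Longrightarrow> idx n x = k"
  using idx tree_disj tree_sub by blast

lemma idx_Suc: "x \<in> A \<Longrightarrow> idx (Suc n) x div 2 = idx n x"
proof -
  assume x: "x \<in> A"
  have "x \<in> tree s A n (idx (Suc n) x div 2)" using idx[OF x, of "Suc n"] tree_sub_parent by blast
  then show ?thesis using idx_eq by metis
qed

lemma idx_div: "x \<in> A \<Longrightarrow> n \<le> m \<Longrightarrow> idx m x div 2^(m-n) = idx n x"
proof (induction m)
  case 0 then show ?case by simp
next
  case (Suc m)
  show ?case
  proof (cases "n = Suc m")
    case True then show ?thesis by simp
  next
    case False
    then have "n \<le> m" using Suc by simp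
    then have "idx m x div 2^(m-n) = idx n x" using Suc by simp
    moreover have "Suc m - n = Suc (m - n)" using \<open>n \<le> m\<close> by simp
    ultimately show ?thesis using idx_Suc[OF Suc.prems(1), of m]
      by (metis div_mult2_eq power_Suc)
  qed
qed

lemma cval_in: "x \<in> A \<Longrightarrow> cval s A n x = real (idx n x) / 2^n"
proof -
  assume x: "x \<in> A"
  have "cval s A n x = (\<Sum>k\<in>{idx n x}. real k / 2^n * indicator (tree s A n k) x)"
    unfolding cval_def using idx[OF x] idx_eq
    by (intro sum.mono_neutral_right) (auto simp: indicator_def)
  then show ?thesis using idx[OF x] by simp
qed

lemma cval_out: "x \<notin> A \<Longrightarrow> cval s A n x = 0"
proof -
  assume x: "x \<notin> A"
  then have "x \<notin> tree s A n k" for k using tree_sub by blast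
  then show ?thesis unfolding cval_def by simp
qed

lemma cval_meas: "cval s A n \<in> borel_measurable M"
  unfolding cval_def using tree_sets by measurable

lemma cval_Suc: "cval s A n x \<le> cval s A (Suc n) x"
proof (cases "x \<in> A")
  case True
  have "2 * idx n x \<le> idx (Suc n) x" using idx_Suc[OF True, of n] by linarith
  then have "real (2 * idx n x) \<le> real (idx (Suc n) x)" by linarith
  then show ?thesis using True by (simp add: cval_in field_simps)
next
  case False then show ?thesis by (simp add: cval_out)
qed

lemma cval_inc: "incseq (\<lambda>n. cval s A n x)"
  by (rule incseq_SucI) (rule cval_Suc)

lemma cval_nonneg: "0 \<le> cval s A n x"
  by (cases "x \<in> A") (auto simp: cval_in cval_out)

lemma cval_upper: "cval s A m x < cval s A n x + 1 / 2^n"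
proof (cases "x \<in> A")
  case x: True
  show ?thesis
  proof (cases "n \<le> m")
    case True
    have "idx m x div 2^(m-n) = idx n x" using idx_div[OF x True] .
    then have "idx m x < (idx n x + 1) * 2^(m-n)"
    proof -
      have r: "idx m x mod 2^(m-n) < 2^(m-n)" by simp
      have "idx n x * 2^(m-n) + idx m x mod 2^(m-n) = idx m x"
        using div_mult_mod_eq[of "idx m x" "2^(m-n)"] \<open>idx m x div 2^(m-n) = idx n x\<close> by simp
      then have "idx m x < idx n x * 2^(m-n) + 2^(m-n)" using r by linarith
      then show ?thesis by (simp add: algebra_simps)
    qed
    then have "real (idx m x) < real ((idx n x + 1) * 2^(m-n))" by (simp only: of_nat_less_iff)
    then have "real (idx m x) < (real (idx n x) + 1) * 2^(m-n)" by (simp add: algebra_simps)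
    then have "real (idx m x) / 2^m < (real (idx n x) + 1) * 2^(m-n) / 2^m"
      by (simp add: divide_strict_right_mono)
    also have "(real (idx n x) + 1) * 2^(m-n) / 2^m = (real (idx n x) + 1) / 2^n"
      using True by (simp add: power_diff field_simps)
    finally show ?thesis using x by (simp add: cval_in add_divide_distrib)
  next
    case False
    then have "cval s A m x \<le> cval s A n x" using cval_inc[of x] by (simp add: incseq_def)
    then show ?thesis by (smt (verit) zero_less_divide_1_iff zero_less_power)
  qed
next
  case False then show ?thesis by (simp add: cval_out)
qed

lemma cval_lt1: "cval s A n x < 1"
  using cval_upper[of n x 0] cval_nonneg[of 0 x] by (simp add: cval_def)

lemma cval_bdd: "bdd_above (range (\<lambda>n. cval s A n x))"
  by (rule bdd_aboveI[of _ 1]) (use cval_lt1 less_imp_le in auto)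

lemma tv_lim: "(\<lambda>n. cval s A n x) \<longlonglongrightarrow> tv s A x"
  unfolding tv_def by (rule LIMSEQ_incseq_SUP[OF cval_bdd cval_inc])

lemma tv_ge: "cval s A n x \<le> tv s A x"
  unfolding tv_def by (rule cSUP_upper[OF _ cval_bdd]) auto

lemma tv_le: "tv s A x \<le> cval s A n x + 1 / 2^n"
  unfolding tv_def by (rule cSUP_least) (auto intro: less_imp_le cval_upper)

lemma cval0: "cval s A 0 x = 0" by (simp add: cval_def)

lemma tv_01: "0 \<le> tv s A x" "tv s A x \<le> 1"
  using tv_ge[of 0 x] cval_nonneg[of 0 x] tv_le[of x 0] cval0[of x] by auto

lemma tv_meas: "tv s A \<in> borel_measurable M"
  by (rule borel_measurable_LIMSEQ_real[OF tv_lim cval_meas])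

lemma tv_dyadic_sets:
  assumes "k \<le> 2^n"
  shows "{x\<in>A. tv s A x < real k / 2^n} \<subseteq> (\<Union>j\<in>{..<k}. tree s A n j)"
    and "(\<Union>j\<in>{..<k}. tree s A n j) \<subseteq> {x\<in>A. tv s A x \<le> real k / 2^n}"
proof -
  show "{x\<in>A. tv s A x < real k / 2^n} \<subseteq> (\<Union>j\<in>{..<k}. tree s A n j)"
  proof
    fix x assume x: "x \<in> {x\<in>A. tv s A x < real k / 2^n}"
    then have "cval s A n x < real k / 2^n" using tv_ge[of n x] by auto
    then have "real (idx n x) < real k" using x by (simp add: cval_in divide_strict_right_mono_neg field_simps)
    then show "x \<in> (\<Union>j\<in>{..<k}. tree s A n j)" using idx[of x n] x by auto
  qed
  show "(\<Union>j\<in>{..<k}. tree s A n j) \<subseteq> {x\<in>A. tv s A x \<le> real k / 2^n}"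
  proof
    fix x assume "x \<in> (\<Union>j\<in>{..<k}. tree s A n j)"
    then obtain j where j: "j < k" "x \<in> tree s A n j" by auto
    then have x: "x \<in> A" using tree_sub by blast
    have "idx n x = j" using idx_eq j by blast
    then have "cval s A n x + 1 / 2^n = (real j + 1) / 2^n" using x by (simp add: cval_in add_divide_distrib)
    also have "\<dots> \<le> real k / 2^n" using j by (simp add: divide_right_mono)
    finally show "x \<in> {x\<in>A. tv s A x \<le> real k / 2^n}" using x tv_le[of x n] by auto
  qed
qed

lemma tv_set_sets: "{x\<in>A. P (tv s A x)} \<in> sets M" if "Measurable.pred borel P"
proof -
  have "{x\<in>space M. P (tv s A x)} \<in> sets M" using tv_meas that by measurable
  then have "{x\<in>space M. P (tv s A x)} \<inter> A \<in> sets M" using A by auto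
  moreover have "{x\<in>space M. P (tv s A x)} \<inter> A = {x\<in>A. P (tv s A x)}"
    using sets.sets_into_space[OF A] by auto
  ultimately show ?thesis by simp
qed

end

locale splitter_measure = splitter +
  fixes N :: "'a measure"
  assumes N_fin: "finite_measure N" and N_sets: "sets N = sets M"
    and halves: "\<And>B. B \<in> sets M \<Longrightarrow> measure N (s B) = measure N B / 2"
begin

interpretation N: finite_measure N by (rule N_fin)

lemma tree_measure: "k < 2^n \<Longrightarrow> measure N (tree s A n k) = measure N A / 2^n"
proof (induction n arbitrary: k)
  case 0 then show ?case by simp
next
  case (Suc n)
  have kk: "k div 2 < 2^n" using Suc.prems by (simp add: less_mult_imp_div_less)
  let ?B = "tree s A n (k div 2)"
  have B: "?B \<in> sets M" by (rule tree_sets)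
  have h: "measure N (s ?B) = measure N ?B / 2" using halves[OF B] .
  show ?case
  proof (cases "even k")
    case True then show ?thesis using h Suc.IH[OF kk] by simp
  next
    case False
    have "measure N (?B - s ?B) = measure N ?B - measure N (s ?B)"
      using B s_sets[OF B] s_sub N_sets by (intro N.finite_measure_Diff) auto
    then show ?thesis using False h Suc.IH[OF kk] by simp
  qed
qed

lemma union_measure:
  assumes "k \<le> 2^n"
  shows "measure N (\<Union>j\<in>{..<k}. tree s A n j) = real k / 2^n * measure N A"
proof -
  have "measure N (\<Union>j\<in>{..<k}. tree s A n j) = (\<Sum>j\<in>{..<k}. measure N (tree s A n j))"
    using tree_sets N_sets tree_disj
    by (intro N.finite_measure_finite_Union) (auto simp: disjoint_family_on_def)
  also have "\<dots> = (\<Sum>j\<in>{..<k}. measure N A / 2^n)"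
    using assms by (intro sum.cong) (auto simp: tree_measure)
  finally show ?thesis by simp
qed

lemma tv_le_meas:
  assumes t: "0 \<le> t" "t \<le> 1"
  shows "measure N {x\<in>A. tv s A x \<le> t} = t * measure N A"
proof (rule antisym)
  have SA: "{x\<in>A. tv s A x \<le> t} \<in> sets N" using tv_set_sets[of "\<lambda>v. v \<le> t"] N_sets by simp
  have Ameas: "0 \<le> measure N A" by simp
  have AN: "A \<in> sets N" using A N_sets by simp
  show "measure N {x\<in>A. tv s A x \<le> t} \<le> t * measure N A"
  proof (rule field_le_epsilon)
    fix e :: real assume e: "0 < e"
    obtain n :: nat where n: "measure N A / 2^n < e"
    proof -
      obtain n :: nat where "measure N A / e < 2^n" using real_arch_pow[of 2 "measure N A / e"] by auto
      then have "measure N A / 2^n < e" using e by (simp add: field_simps)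
      then show ?thesis using that by blast
    qed
    define k where "k = nat (floor (t * 2^n)) + 1"
    have k1: "t < real k / 2^n" unfolding k_def by (simp add: field_simps, (linarith)?)
    have k2: "real k / 2^n \<le> t + 1 / 2^n" unfolding k_def using t by (simp add: field_simps, (linarith)?)
    have up: "measure N {x\<in>A. tv s A x \<le> t} \<le> (t + 1/2^n) * measure N A"
    proof (cases "k \<le> 2^n")
      case True
      have "measure N {x\<in>A. tv s A x \<le> t} \<le> measure N {x\<in>A. tv s A x < real k / 2^n}"
        using k1 tv_set_sets[of "\<lambda>v. v < real k / 2^n"] N_sets by (intro N.finite_measure_mono) auto
      also have "\<dots> \<le> measure N (\<Union>j\<in>{..<k}. tree s A n j)"
        using tv_dyadic_sets(1)[OF True] tree_sets N_sets by (intro N.finite_measure_mono) auto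
      also have "\<dots> = real k / 2^n * measure N A" using union_measure[OF True] by simp
      also have "\<dots> \<le> (t + 1/2^n) * measure N A" using k2 Ameas by (intro mult_right_mono) auto
      finally show ?thesis .
    next
      case False
      then have "real (2^n) < real k" by linarith
      then have "1 < real k / 2^n" by (simp add: field_simps)
      then have "1 \<le> t + 1 / 2^n" using k2 by linarith
      have "measure N {x\<in>A. tv s A x \<le> t} \<le> measure N A"
        using AN by (intro N.finite_measure_mono) auto
      also have "\<dots> \<le> (t + 1/2^n) * measure N A"
        using \<open>1 \<le> t + 1 / 2^n\<close> Ameas by (metis mult_1 mult_right_mono)
      finally show ?thesis .
    qed
    also have "(t + 1/2^n) * measure N A = t * measure N A + measure N A / 2^n" by (simp add: field_simps)
    finally show "measure N {x\<in>A. tv s A x \<le> t} \<le> t * measure N A + e" using n by linarith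
  qed
  show "t * measure N A \<le> measure N {x\<in>A. tv s A x \<le> t}"
  proof (rule field_le_epsilon)
    fix e :: real assume e: "0 < e"
    obtain n :: nat where n: "measure N A / 2^n < e"
    proof -
      obtain n :: nat where "measure N A / e < 2^n" using real_arch_pow[of 2 "measure N A / e"] by auto
      then have "measure N A / 2^n < e" using e by (simp add: field_simps)
      then show ?thesis using that by blast
    qed
    define k where "k = nat (floor (t * 2^n))"
    have k1: "real k / 2^n \<le> t" unfolding k_def using t by (simp add: field_simps)
    have fl: "real k = of_int (floor (t * 2^n))" using t by (simp add: k_def)
    have "t * 2^n - 1 \<le> real k" using fl floor_correct[of "t * 2^n"] by linarith
    then have "(t * 2^n - 1) / 2^n \<le> real k / 2^n" by (simp add: divide_right_mono)
    then have k2: "t - 1 / 2^n \<le> real k / 2^n" by (simp add: diff_divide_distrib)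
    have kle: "k \<le> 2^n"
    proof -
      have "real k \<le> t * 2^n" using k1 by (simp add: field_simps)
      moreover have "t * 2^n \<le> 2^n" using t by (intro mult_left_le_one_le) auto
      ultimately have "real k \<le> 2^n" by linarith
      then have "real k \<le> real ((2::nat)^n)" by simp
      then show ?thesis by (simp only: of_nat_le_iff)
    qed
    have "(t - 1/2^n) * measure N A \<le> real k / 2^n * measure N A" using k2 Ameas by (intro mult_right_mono) auto
    also have "\<dots> = measure N (\<Union>j\<in>{..<k}. tree s A n j)" using union_measure[OF kle] by simp
    also have "\<dots> \<le> measure N {x\<in>A. tv s A x \<le> real k / 2^n}"
      using tv_dyadic_sets(2)[OF kle] tv_set_sets[of "\<lambda>v. v \<le> real k / 2^n"] N_sets
      by (intro N.finite_measure_mono) auto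
    also have "\<dots> \<le> measure N {x\<in>A. tv s A x \<le> t}"
      using k1 SA by (intro N.finite_measure_mono) auto
    finally have "(t - 1/2^n) * measure N A \<le> measure N {x\<in>A. tv s A x \<le> t}" .
    moreover have "(t - 1/2^n) * measure N A = t * measure N A - measure N A / 2^n" by (simp add: field_simps)
    ultimately show "t * measure N A \<le> measure N {x\<in>A. tv s A x \<le> t} + e" using n by linarith
  qed
qed

end

definition halfP :: "'a measure \<Rightarrow> 'a set \<Rightarrow> 'a set" where
  "halfP M B = (if B \<in> sets M then (SOME C. C \<in> sets M \<and> C \<subseteq> B \<and> measure M C = measure M B / 2) else {})"

lemma halfP:
  assumes P: "prob_space M"
    and atl: "\<forall>A\<in>sets M. 0 < measure M A \<longrightarrow>
     (\<exists>B\<in>sets M. B \<subseteq> A \<and> 0 < measure M B \<and> measure M B < measure M A)"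
  shows "splitter M (halfP M) B \<longleftrightarrow> B \<in> sets M"
    and "\<And>B. B \<in> sets M \<Longrightarrow> halfP M B \<in> sets M \<and> halfP M B \<subseteq> B \<and> measure M (halfP M B) = measure M B / 2"
proof -
  have ex: "\<exists>C. C \<in> sets M \<and> C \<subseteq> B \<and> measure M C = measure M B / 2" if "B \<in> sets M" for B
    using atomless_target[OF P atl that, of "measure M B / 2"] by auto
  show *: "halfP M B \<in> sets M \<and> halfP M B \<subseteq> B \<and> measure M (halfP M B) = measure M B / 2" if "B \<in> sets M" for B
    unfolding halfP_def using someI_ex[OF ex[OF that]] that by simp
  have "halfP M B \<subseteq> B" for B using * by (cases "B \<in> sets M") (auto simp: halfP_def)
  moreover have "halfP M B \<in> sets M" if "B \<in> sets M" for B using * that by blast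
  ultimately show "splitter M (halfP M) B \<longleftrightarrow> B \<in> sets M"
    unfolding splitter_def by blast
qed

lemma fair_half:
  assumes P: "prob_space M"
    and atl: "\<forall>A\<in>sets M. 0 < measure M A \<longrightarrow>
     (\<exists>B\<in>sets M. B \<subseteq> A \<and> 0 < measure M B \<and> measure M B < measure M A)"
    and Q: "finite_measure Q" "sets Q = sets M"
    and ac: "\<And>S. S \<in> sets M \<Longrightarrow> measure M S = 0 \<Longrightarrow> measure Q S = 0"
    and B: "B \<in> sets M"
  shows "\<exists>C\<in>sets M. C \<subseteq> B \<and> measure M C = measure M B / 2 \<and> measure Q C = measure Q B / 2"
proof -
  interpret prob_space M by fact
  interpret Q: finite_measure Q by fact
  have hP: "\<And>B. B \<in> sets M \<Longrightarrow> halfP M B \<in> sets M \<and> halfP M B \<subseteq> B \<and> measure M (halfP M B) = measure M B / 2"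
    using halfP[OF P atl] by blast
  interpret sp: splitter M "halfP M" B using halfP(1)[OF P atl] B by blast
  interpret spm: splitter_measure M "halfP M" B M
    by unfold_locales (auto simp: hP finite_measure_axioms)
  define V where "V = tv (halfP M) B"
  have Vm: "V \<in> borel_measurable M" unfolding V_def by (rule sp.tv_meas)
  have V01: "0 \<le> V x" "V x \<le> 1" for x unfolding V_def using sp.tv_01 by auto
  have PV: "measure M {x\<in>B. V x \<le> t} = t * measure M B" if "0 \<le> t" "t \<le> 1" for t
    unfolding V_def using spm.tv_le_meas that by blast
  have Vsets: "{x\<in>B. V x \<le> t} \<in> sets M" for t
    unfolding V_def by (rule sp.tv_set_sets) measurable
  have Vsets2: "{x\<in>B. V x = t} \<in> sets M" for t
    unfolding V_def by (rule sp.tv_set_sets) measurable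
  show ?thesis
  proof (cases "measure Q B = 0")
    case True
    have "measure Q (halfP M B) \<le> measure Q B"
      using hP[OF B] B Q(2) by (intro Q.finite_measure_mono) auto
    then have "measure Q (halfP M B) = 0" using True by (simp add: measure_nonneg antisym)
    then show ?thesis using hP[OF B] True by (intro bexI[of _ "halfP M B"]) auto
  next
    case Qpos: False
    have Pnull: "measure M {x\<in>B. V x = t} = 0" for t
    proof (cases "0 < t \<and> t \<le> 1")
      case True
      show ?thesis
      proof (rule antisym[OF field_le_epsilon measure_nonneg])
        fix e :: real assume e: "0 < e"
        define d where "d = min t (e / (measure M B + 1))"
        have d: "0 < d" "d \<le> t" "d * measure M B \<le> e"
        proof -
          have "0 < measure M B + 1" by (simp add: add_nonneg_pos)
          then show "0 < d" using True e by (simp add: d_def)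
          show "d \<le> t" by (simp add: d_def)
          have "d * measure M B \<le> e / (measure M B + 1) * measure M B"
            by (intro mult_right_mono) (auto simp: d_def)
          also have "\<dots> \<le> e" using e by (simp add: field_simps add_pos_nonneg)
          finally show "d * measure M B \<le> e" .
        qed
        have sub: "{x\<in>B. V x = t} \<subseteq> {x\<in>B. V x \<le> t} - {x\<in>B. V x \<le> t - d}" using d by auto
        have "measure M {x\<in>B. V x = t} \<le> measure M ({x\<in>B. V x \<le> t} - {x\<in>B. V x \<le> t - d})"
          using sub Vsets by (intro finite_measure_mono) auto
        also have "\<dots> = measure M {x\<in>B. V x \<le> t} - measure M {x\<in>B. V x \<le> t - d}"
          using Vsets d by (intro finite_measure_Diff) auto
        also have "\<dots> = d * measure M B" using PV[of t] PV[of "t - d"] True d by (simp add: algebra_simps)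
        finally show "measure M {x\<in>B. V x = t} \<le> 0 + e" using d by simp
      qed
    next
      case False
      show ?thesis
      proof (cases "t = 0")
        case True
        have "measure M {x\<in>B. V x = t} \<le> measure M {x\<in>B. V x \<le> 0}"
          using Vsets True by (intro finite_measure_mono) auto
        also have "\<dots> = 0" using PV[of 0] by simp
        finally show ?thesis by (simp add: measure_nonneg antisym)
      next
        case False
        have "V x \<noteq> t" for x using False \<open>\<not> (0 < t \<and> t \<le> 1)\<close> V01[of x] by linarith
        then have e: "{x\<in>B. V x = t} = {}" by auto
        show ?thesis by (simp only: e measure_empty)
      qed
    qed
    have Qnull: "measure Q {x\<in>B. V x = t} = 0" for t using ac[OF Vsets2 Pnull] .
    define QB where "QB = density Q (indicator B)"
    define mu where "mu = distr QB borel V"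
    have BQ: "B \<in> sets Q" using B Q(2) by simp
    have sQB: "sets QB = sets M" unfolding QB_def using Q(2) by simp
    have VmQB: "V \<in> borel_measurable QB" unfolding measurable_cong_sets[OF sQB refl] by (rule Vm)
    have spQB: "space QB = space M" using sQB sets_eq_imp_space_eq by blast
    have eQB: "emeasure QB S = emeasure Q (B \<inter> S)" if "S \<in> sets M" for S
      unfolding QB_def using emeasure_restricted[OF BQ, of S] that Q(2) by simp
    have mQB: "measure QB S = measure Q (B \<inter> S)" if "S \<in> sets M" for S
      using eQB[OF that] by (simp add: measure_def)
    have finQB: "finite_measure QB"
    proof (rule finite_measureI)
      show "emeasure QB (space QB) \<noteq> \<infinity>" unfolding spQB eQB[OF sets.top] by (simp add: Q.emeasure_eq_measure)
    qed
    interpret mu: finite_borel_measure mu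
    proof -
      interpret QB: finite_measure QB by (rule finQB)
      have "finite_measure mu" unfolding mu_def by (rule QB.finite_measure_distr[OF VmQB])
      moreover have "sets mu = sets borel" unfolding mu_def by simp
      ultimately show "finite_borel_measure mu"
        by (intro finite_borel_measure.intro finite_borel_measure_axioms.intro)
    qed
    have Vpre: "V -` S \<inter> space M \<in> sets M" if "S \<in> sets borel" for S using Vm that by measurable
    have mu_meas: "measure mu S = measure Q {x\<in>B. V x \<in> S}" if "S \<in> sets borel" for S
    proof -
      have "measure mu S = measure QB (V -` S \<inter> space M)"
        unfolding mu_def using measure_distr[OF VmQB that] spQB by simp
      also have "\<dots> = measure Q (B \<inter> (V -` S \<inter> space M))" using mQB[OF Vpre[OF that]] .
      also have "B \<inter> (V -` S \<inter> space M) = {x\<in>B. V x \<in> S}" using sets.sets_into_space[OF B] by auto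
      finally show ?thesis .
    qed
    define G where "G t = cdf mu t" for t
    have G: "G t = measure Q {x\<in>B. V x \<le> t}" for t
      unfolding G_def cdf_def2 using mu_meas[of "{..t}"] by simp
    have Gcont: "isCont G t" for t
      unfolding G_def mu.isCont_cdf using mu_meas[of "{t}"] Qnull[of t] by simp
    have G0: "G 0 = 0"
    proof -
      have "{x\<in>B. V x \<le> 0} = {x\<in>B. V x = 0}" using V01 by (auto intro: antisym)
      then show ?thesis using G Qnull by simp
    qed
    have G1: "G 1 = measure Q B" using G V01 by simp
    define f where "f r = G (r + 1/2) - G r" for r
    have fcont: "continuous_on {0..1/2} f"
      unfolding f_def by (intro continuous_at_imp_continuous_on ballI continuous_intros isCont_o2[OF _ Gcont]) auto
    have fsum: "f 0 + f (1/2) = measure Q B" using G0 G1 by (simp add: f_def)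
    obtain r where r: "0 \<le> r" "r \<le> 1/2" "f r = measure Q B / 2"
    proof (cases "f 0 \<le> measure Q B / 2")
      case True
      then have "measure Q B / 2 \<le> f (1/2)" using fsum by linarith
      then show ?thesis using IVT'[of f 0 "measure Q B / 2" "1/2", OF True _ _ fcont] that by auto
    next
      case False
      then have "f (1/2) \<le> measure Q B / 2" using fsum by linarith
      then show ?thesis using IVT2'[of f "1/2" "measure Q B / 2" 0, OF _ _ _ fcont] False that by auto
    qed
    define C where "C = {x\<in>B. V x \<le> r + 1/2} - {x\<in>B. V x \<le> r}"
    have Cs: "C \<in> sets M" unfolding C_def using Vsets by auto
    have "measure Q C = measure Q {x\<in>B. V x \<le> r + 1/2} - measure Q {x\<in>B. V x \<le> r}"
      unfolding C_def using Vsets Q(2) by (intro Q.finite_measure_Diff) auto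
    then have QC: "measure Q C = measure Q B / 2" using r G by (simp add: f_def)
    have "measure M C = measure M {x\<in>B. V x \<le> r + 1/2} - measure M {x\<in>B. V x \<le> r}"
      unfolding C_def using Vsets by (intro finite_measure_Diff) auto
    then have PC: "measure M C = measure M B / 2" using r PV[of r] PV[of "r + 1/2"] by (simp add: algebra_simps)
    show ?thesis using Cs QC PC by (intro bexI[of _ C]) (auto simp: C_def)
  qed
qed

context splitter_measure
begin

interpretation N: finite_measure N by (rule N_fin)

lemma tv_eq_null: "measure N {x\<in>A. tv s A x = t} = 0"
proof -
  have Vsets: "{x\<in>A. tv s A x \<le> t} \<in> sets N" for t using tv_set_sets[of "\<lambda>v. v \<le> t"] N_sets by simp
  have Vsets2: "{x\<in>A. tv s A x = t} \<in> sets N" using tv_set_sets[of "\<lambda>v. v = t"] N_sets by simp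
  show ?thesis
  proof (cases "0 < t \<and> t \<le> 1")
    case True
    show ?thesis
    proof (rule antisym[OF field_le_epsilon measure_nonneg])
      fix e :: real assume e: "0 < e"
      define d where "d = min t (e / (measure N A + 1))"
      have d: "0 < d" "d \<le> t" "d * measure N A \<le> e"
      proof -
        have "0 < measure N A + 1" by (simp add: add_nonneg_pos)
        then show "0 < d" using True e by (simp add: d_def)
        show "d \<le> t" by (simp add: d_def)
        have "d * measure N A \<le> e / (measure N A + 1) * measure N A"
          by (intro mult_right_mono) (auto simp: d_def)
        also have "\<dots> \<le> e" using e by (simp add: field_simps add_pos_nonneg)
        finally show "d * measure N A \<le> e" .
      qed
      have sub: "{x\<in>A. tv s A x = t} \<subseteq> {x\<in>A. tv s A x \<le> t} - {x\<in>A. tv s A x \<le> t - d}" using d by auto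
      have "measure N {x\<in>A. tv s A x = t} \<le> measure N ({x\<in>A. tv s A x \<le> t} - {x\<in>A. tv s A x \<le> t - d})"
        using sub Vsets by (intro N.finite_measure_mono) auto
      also have "\<dots> = measure N {x\<in>A. tv s A x \<le> t} - measure N {x\<in>A. tv s A x \<le> t - d}"
        using Vsets d by (intro N.finite_measure_Diff) auto
      also have "\<dots> = d * measure N A" using tv_le_meas[of t] tv_le_meas[of "t - d"] True d by (simp add: algebra_simps)
      finally show "measure N {x\<in>A. tv s A x = t} \<le> 0 + e" using d by simp
    qed
  next
    case False
    show ?thesis
    proof (cases "t = 0")
      case True
      have "measure N {x\<in>A. tv s A x = t} \<le> measure N {x\<in>A. tv s A x \<le> 0}"
        using Vsets True by (intro N.finite_measure_mono) auto
      also have "\<dots> = 0" using tv_le_meas[of 0] by simp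
      finally show ?thesis by (simp add: measure_nonneg antisym)
    next
      case False
      have "tv s A x \<noteq> t" for x using False \<open>\<not> (0 < t \<and> t \<le> 1)\<close> tv_01[of x] by linarith
      then have e: "{x\<in>A. tv s A x = t} = {}" by auto
      show ?thesis by (simp only: e measure_empty)
    qed
  qed
qed

end

definition halfF :: "'a measure \<Rightarrow> 'a measure \<Rightarrow> 'a set \<Rightarrow> 'a set" where
  "halfF M Q B = (if B \<in> sets M then (SOME C. C \<in> sets M \<and> C \<subseteq> B \<and> measure M C = measure M B / 2 \<and> measure Q C = measure Q B / 2) else {})"

definition vclip :: "real \<Rightarrow> real" where
  "vclip v = (if 0 < v \<and> v < 1 then v else 1/2)"

lemma uniform_both:
  assumes P: "prob_space M"
    and atl: "\<forall>A\<in>sets M. 0 < measure M A \<longrightarrow>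
     (\<exists>B\<in>sets M. B \<subseteq> A \<and> 0 < measure M B \<and> measure M B < measure M A)"
    and Q: "finite_measure Q" "sets Q = sets M"
    and ac: "\<And>S. S \<in> sets M \<Longrightarrow> measure M S = 0 \<Longrightarrow> measure Q S = 0"
    and A: "A \<in> sets M"
  shows "\<exists>V\<in>borel_measurable M. (\<forall>x. 0 < V x \<and> V x < 1) \<and>
    (\<forall>t. 0 \<le> t \<longrightarrow> t \<le> 1 \<longrightarrow> measure M {x\<in>A. V x \<le> t} = t * measure M A \<and> measure Q {x\<in>A. V x \<le> t} = t * measure Q A)"
proof -
  interpret prob_space M by fact
  interpret Q: finite_measure Q by fact
  have ex: "\<exists>C. C \<in> sets M \<and> C \<subseteq> B \<and> measure M C = measure M B / 2 \<and> measure Q C = measure Q B / 2" if "B \<in> sets M" for B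
    using fair_half[OF P atl Q ac that] by blast
  have hF: "halfF M Q B \<in> sets M \<and> halfF M Q B \<subseteq> B \<and> measure M (halfF M Q B) = measure M B / 2 \<and> measure Q (halfF M Q B) = measure Q B / 2"
    if "B \<in> sets M" for B
    unfolding halfF_def using someI_ex[OF ex[OF that]] that by simp
  have sub: "halfF M Q B \<subseteq> B" for B using hF by (cases "B \<in> sets M") (auto simp: halfF_def)
  interpret sp: splitter M "halfF M Q" A
    by unfold_locales (use hF sub A in blast)+
  interpret spP: splitter_measure M "halfF M Q" A M
    by unfold_locales (auto simp: hF finite_measure_axioms)
  interpret spQ: splitter_measure M "halfF M Q" A Q
    by unfold_locales (auto simp: hF Q)
  define V where "V = tv (halfF M Q) A"
  define V' where "V' x = vclip (V x)" for x
  have Vm: "V \<in> borel_measurable M" unfolding V_def by (rule sp.tv_meas)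
  have V'm: "V' \<in> borel_measurable M" unfolding V'_def vclip_def using Vm by measurable
  have V'01: "0 < V' x \<and> V' x < 1" for x unfolding V'_def vclip_def by auto
  have key: "measure N {x\<in>A. V' x \<le> t} = t * measure N A"
    if N: "finite_measure N" "sets N = sets M" and tv: "\<And>t. 0 \<le> t \<Longrightarrow> t \<le> 1 \<Longrightarrow> measure N {x\<in>A. V x \<le> t} = t * measure N A"
      and nl: "\<And>t. measure N {x\<in>A. V x = t} = 0" and t: "0 \<le> t" "t \<le> 1" for N t
  proof -
    interpret N: finite_measure N by fact
    have sV: "{x\<in>A. P (V x)} \<in> sets N" if "Measurable.pred borel P" for P
      unfolding V_def using sp.tv_set_sets[OF that] N by simp
    have p0: "Measurable.pred borel (\<lambda>v::real. v = 0)" by measurable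
    have p1: "Measurable.pred borel (\<lambda>v::real. v = 1)" by measurable
    have p2: "Measurable.pred borel (\<lambda>v::real. vclip v \<le> t)" unfolding vclip_def by measurable
    have p3: "Measurable.pred borel (\<lambda>v::real. v \<le> t)" by measurable
    define Z where "Z = {x\<in>A. V x = 0} \<union> {x\<in>A. V x = 1}"
    have Zs: "Z \<in> sets N" unfolding Z_def using sV[OF p0] sV[OF p1] by blast
    have Z0: "measure N Z = 0"
    proof -
      have "measure N Z \<le> measure N {x\<in>A. V x = 0} + measure N {x\<in>A. V x = 1}"
        unfolding Z_def using sV[OF p0] sV[OF p1] by (intro measure_subadditive) (auto simp: N.emeasure_eq_measure)
      then show ?thesis using nl[of 0] nl[of 1] measure_nonneg[of N Z] by linarith
    qed
    have s1: "{x\<in>A. V' x \<le> t} \<in> sets N" unfolding V'_def using sV[OF p2] .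
    have s2: "{x\<in>A. V x \<le> t} \<in> sets N" using sV[OF p3] .
    have V01: "0 \<le> V x" "V x \<le> 1" for x unfolding V_def using sp.tv_01 by auto
    have eq: "x \<notin> Z \<Longrightarrow> x \<in> A \<Longrightarrow> V' x = V x" for x unfolding V'_def vclip_def Z_def using V01[of x] by auto
    have "measure N {x\<in>A. V' x \<le> t} \<le> measure N ({x\<in>A. V x \<le> t} \<union> Z)"
      using eq s2 Zs by (intro N.finite_measure_mono) auto
    also have "\<dots> \<le> measure N {x\<in>A. V x \<le> t} + measure N Z"
      using s2 Zs by (intro measure_subadditive) (auto simp: N.emeasure_eq_measure)
    finally have le1: "measure N {x\<in>A. V' x \<le> t} \<le> measure N {x\<in>A. V x \<le> t}" using Z0 by simp
    have "measure N {x\<in>A. V x \<le> t} \<le> measure N ({x\<in>A. V' x \<le> t} \<union> Z)"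
      using eq s1 Zs by (intro N.finite_measure_mono) auto
    also have "\<dots> \<le> measure N {x\<in>A. V' x \<le> t} + measure N Z"
      using s1 Zs by (intro measure_subadditive) (auto simp: N.emeasure_eq_measure)
    finally have le2: "measure N {x\<in>A. V x \<le> t} \<le> measure N {x\<in>A. V' x \<le> t}" using Z0 by simp
    show ?thesis using le1 le2 tv[OF t] by simp
  qed
  have "measure M {x\<in>A. V' x \<le> t} = t * measure M A \<and> measure Q {x\<in>A. V' x \<le> t} = t * measure Q A"
    if "0 \<le> t" "t \<le> 1" for t
  proof
    show "measure M {x\<in>A. V' x \<le> t} = t * measure M A"
      by (rule key[OF finite_measure_axioms refl _ _ that])
        (auto simp: V_def spP.tv_le_meas spP.tv_eq_null)
    show "measure Q {x\<in>A. V' x \<le> t} = t * measure Q A"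
      by (rule key[OF Q _ _ that])
        (auto simp: V_def spQ.tv_le_meas spQ.tv_eq_null)
  qed
  then show ?thesis using V'm V'01 by blast
qed

lemma transfer_nn:
  fixes Y :: "'a \<Rightarrow> real" and f :: "real \<Rightarrow> ennreal"
  assumes Y: "Y \<in> borel_measurable N" and A: "A \<in> sets N"
    and A0: "emeasure N A \<noteq> 0" and Ainf: "emeasure N A \<noteq> \<infinity>"
    and f: "f \<in> borel_measurable borel"
  shows "(\<integral>\<^sup>+\<omega>. f (Y \<omega>) * indicator A \<omega> \<partial>N) = emeasure N A * (\<integral>\<^sup>+x. f x \<partial>distr (uniform_measure N A) borel Y)"
proof -
  have YU: "Y \<in> borel_measurable (uniform_measure N A)"
    unfolding measurable_cong_sets[OF sets_uniform_measure refl] by (rule Y)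
  have "(\<integral>\<^sup>+x. f x \<partial>distr (uniform_measure N A) borel Y) = (\<integral>\<^sup>+\<omega>. f (Y \<omega>) \<partial>uniform_measure N A)"
    using YU f by (intro nn_integral_distr) auto
  also have "\<dots> = (\<integral>\<^sup>+\<omega>. f (Y \<omega>) * indicator A \<omega> \<partial>N) / emeasure N A"
    using Y f A by (intro nn_integral_uniform_measure) auto
  finally have "emeasure N A * (\<integral>\<^sup>+x. f x \<partial>distr (uniform_measure N A) borel Y)
      = emeasure N A * ((\<integral>\<^sup>+\<omega>. f (Y \<omega>) * indicator A \<omega> \<partial>N) / emeasure N A)" by simp
  also have "\<dots> = ((\<integral>\<^sup>+\<omega>. f (Y \<omega>) * indicator A \<omega> \<partial>N) * emeasure N A) / emeasure N A"
    by (simp only: ennreal_times_divide mult.commute)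
  also have "\<dots> = (\<integral>\<^sup>+\<omega>. f (Y \<omega>) * indicator A \<omega> \<partial>N)"
    using A0 Ainf by (intro ennreal_mult_divide_eq) auto
  finally show ?thesis by simp
qed

lemma quantile_distr:
  assumes mu: "real_distribution \<mu>" and nu: "finite_measure \<nu>" and A: "A \<in> sets \<nu>"
    and Apos: "0 < measure \<nu> A"
    and V01: "\<And>x. 0 < V x \<and> V x < 1"
    and Vd: "\<And>t. 0 \<le> t \<Longrightarrow> t \<le> 1 \<Longrightarrow> measure \<nu> {x\<in>A. V x \<le> t} = t * measure \<nu> A"
    and Y: "Y \<in> borel_measurable \<nu>" and YA: "\<And>\<omega>. \<omega> \<in> A \<Longrightarrow> Y \<omega> = Inf {x. V \<omega> \<le> cdf \<mu> x}"
  shows "distr (uniform_measure \<nu> A) borel Y = \<mu>"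
proof -
  interpret cdf_distribution \<mu> using mu by (simp add: cdf_distribution_def)
  interpret nu: finite_measure \<nu> by fact
  have eA: "emeasure \<nu> A \<noteq> 0" "emeasure \<nu> A \<noteq> \<infinity>" using Apos by (auto simp: nu.emeasure_eq_measure)
  interpret U: prob_space "uniform_measure \<nu> A" by (rule prob_space_uniform_measure[OF eA])
  have YU: "Y \<in> borel_measurable (uniform_measure \<nu> A)"
    unfolding measurable_cong_sets[OF sets_uniform_measure refl] by (rule Y)
  have rd: "real_distribution (distr (uniform_measure \<nu> A) borel Y)"
    using YU by (rule U.real_distribution_distr)
  show ?thesis
  proof (rule cdf_unique[OF rd mu], rule ext)
    fix x
    have pre: "Y -` {..x} \<inter> space \<nu> \<in> sets \<nu>" using Y by measurable
    have sub: "A \<subseteq> space \<nu>" using A by (rule sets.sets_into_space)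
    have seteq: "A \<inter> (Y -` {..x} \<inter> space \<nu>) = {\<omega>\<in>A. V \<omega> \<le> cdf \<mu> x}"
    proof -
      have "Y \<omega> \<le> x \<longleftrightarrow> V \<omega> \<le> cdf \<mu> x" if "\<omega> \<in> A" for \<omega>
        using pseudoinverse[of "V \<omega>" x] V01[of \<omega>] YA[OF that] by simp
      then show ?thesis using sub by auto
    qed
    have "cdf (distr (uniform_measure \<nu> A) borel Y) x = measure (uniform_measure \<nu> A) (Y -` {..x} \<inter> space (uniform_measure \<nu> A))"
      unfolding cdf_def using YU by (simp add: measure_distr)
    also have "\<dots> = measure \<nu> (A \<inter> (Y -` {..x} \<inter> space \<nu>)) / measure \<nu> A"
      using pre eA by simp
    also have "\<dots> = cdf \<mu> x * measure \<nu> A / measure \<nu> A"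
      unfolding seteq using Vd[of "cdf \<mu> x"] cdf_nonneg cdf_bounded_prob by simp
    also have "\<dots> = cdf \<mu> x" using Apos by simp
    finally show "cdf (distr (uniform_measure \<nu> A) borel Y) x = cdf \<mu> x" .
  qed
qed


lemma nn_split:
  assumes h: "h \<in> borel_measurable M" and A: "A \<in> sets M"
  shows "(\<integral>\<^sup>+\<omega>. h \<omega> \<partial>M) = (\<integral>\<^sup>+\<omega>. h \<omega> * indicator A \<omega> \<partial>M) + (\<integral>\<^sup>+\<omega>. h \<omega> * indicator (space M - A) \<omega> \<partial>M)"
proof -
  have "(\<integral>\<^sup>+\<omega>. h \<omega> \<partial>M) = (\<integral>\<^sup>+\<omega>. h \<omega> * indicator A \<omega> + h \<omega> * indicator (space M - A) \<omega> \<partial>M)"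
    by (intro nn_integral_cong) (auto simp: indicator_def)
  also have "\<dots> = (\<integral>\<^sup>+\<omega>. h \<omega> * indicator A \<omega> \<partial>M) + (\<integral>\<^sup>+\<omega>. h \<omega> * indicator (space M - A) \<omega> \<partial>M)"
    using h A by (intro nn_integral_add) auto
  finally show ?thesis .
qed

lemma emeasure_distr_nn:
  assumes Y: "Y \<in> borel_measurable M" and S: "S \<in> sets borel"
  shows "emeasure (distr M borel Y) S = (\<integral>\<^sup>+\<omega>. indicator S (Y \<omega>) \<partial>M)"
proof -
  have "emeasure (distr M borel Y) S = (\<integral>\<^sup>+x. indicator S x \<partial>distr M borel Y)"
    using S by simp
  also have "\<dots> = (\<integral>\<^sup>+\<omega>. indicator S (Y \<omega>) \<partial>M)"
    using Y S by (intro nn_integral_distr) auto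
  finally show ?thesis .
qed

lemma rearr1:
  fixes M :: "'a measure" and Z X :: "'a \<Rightarrow> real"
  assumes P: "prob_space M" and atl: "atomless M" and Zd: "Z \<in> densities M"
    and A: "A \<in> sets M" and PA: "0 < measure M A" and X: "X \<in> borel_measurable M"
  defines "c \<equiv> (\<integral>\<omega>. Z \<omega> * indicator A \<omega> \<partial>M) / measure M A"
  shows "\<exists>X'\<in>borel_measurable M. \<forall>f::real\<Rightarrow>ennreal. f \<in> borel_measurable borel \<longrightarrow>
     (\<integral>\<^sup>+\<omega>. f (X' \<omega>) * indicator A \<omega> \<partial>M) = (\<integral>\<^sup>+\<omega>. f (X \<omega>) * indicator A \<omega> \<partial>M) \<and>
     (\<integral>\<^sup>+\<omega>. ennreal (Z \<omega>) * (f (X' \<omega>) * indicator A \<omega>) \<partial>M) = ennreal c * (\<integral>\<^sup>+\<omega>. f (X \<omega>) * indicator A \<omega> \<partial>M)"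
proof -
  interpret prob_space M by fact
  have Zm: "Z \<in> borel_measurable M" and Zpos: "AE \<omega> in M. 0 \<le> Z \<omega>" and Zint: "integrable M Z"
    using Zd by (auto simp: densities_def)
  have atl': "\<forall>A\<in>sets M. 0 < measure M A \<longrightarrow>
     (\<exists>B\<in>sets M. B \<subseteq> A \<and> 0 < measure M B \<and> measure M B < measure M A)"
    using atl by (simp add: atomless_def)
  define Q where "Q = density M (\<lambda>\<omega>. ennreal (Z \<omega>))"
  have sQ: "sets Q = sets M" unfolding Q_def by simp
  have spQ: "space Q = space M" unfolding Q_def by simp
  have intS: "integrable M (\<lambda>\<omega>. Z \<omega> * indicator S \<omega>)" if "S \<in> sets M" for S
    using integrable_real_mult_indicator[OF that Zint] .
  have posS: "AE \<omega> in M. 0 \<le> Z \<omega> * indicator S \<omega>" for S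
    using Zpos by eventually_elim (auto simp: indicator_def)
  have eQ: "emeasure Q S = ennreal (\<integral>\<omega>. Z \<omega> * indicator S \<omega> \<partial>M)" if S: "S \<in> sets M" for S
  proof -
    have "emeasure Q S = (\<integral>\<^sup>+\<omega>. ennreal (Z \<omega>) * indicator S \<omega> \<partial>M)"
      unfolding Q_def using Zm S by (intro emeasure_density) auto
    also have "\<dots> = (\<integral>\<^sup>+\<omega>. ennreal (Z \<omega> * indicator S \<omega>) \<partial>M)"
      by (intro nn_integral_cong) (auto simp: indicator_def)
    also have "\<dots> = ennreal (\<integral>\<omega>. Z \<omega> * indicator S \<omega> \<partial>M)"
      using intS[OF S] posS by (intro nn_integral_eq_integral) auto
    finally show ?thesis .
  qed
  have iS0: "0 \<le> (\<integral>\<omega>. Z \<omega> * indicator S \<omega> \<partial>M)" for S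
    using posS by (intro integral_nonneg_AE) auto
  have mQ: "measure Q S = (\<integral>\<omega>. Z \<omega> * indicator S \<omega> \<partial>M)" if S: "S \<in> sets M" for S
    using eQ[OF S] iS0[of S] by (simp add: measure_def)
  have Qfin: "finite_measure Q"
    by (rule finite_measureI) (simp add: spQ eQ)
  interpret Q: finite_measure Q by (rule Qfin)
  have ac: "measure Q S = 0" if S: "S \<in> sets M" and S0: "measure M S = 0" for S
  proof -
    have "S \<in> null_sets M" using S S0 by (simp add: null_sets_def emeasure_eq_measure)
    then have "AE \<omega> in M. \<omega> \<notin> S" by (rule AE_not_in)
    then have "(\<integral>\<omega>. Z \<omega> * indicator S \<omega> \<partial>M) = (\<integral>\<omega>. 0 \<partial>M)"
      using Zm S by (intro integral_cong_AE) (auto elim!: eventually_mono)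
    then show ?thesis using mQ[OF S] by simp
  qed
  obtain V where Vm: "V \<in> borel_measurable M" and V01: "\<And>x. 0 < V x \<and> V x < 1"
    and Vd: "\<And>t. 0 \<le> t \<Longrightarrow> t \<le> 1 \<Longrightarrow> measure M {x\<in>A. V x \<le> t} = t * measure M A \<and> measure Q {x\<in>A. V x \<le> t} = t * measure Q A"
    using uniform_both[OF P atl' Qfin sQ ac A] by blast
  have eA: "emeasure M A \<noteq> 0" "emeasure M A \<noteq> \<infinity>" using PA by (auto simp: emeasure_eq_measure)
  interpret U: prob_space "uniform_measure M A" by (rule prob_space_uniform_measure[OF eA])
  define \<mu> where "\<mu> = distr (uniform_measure M A) borel X"
  have XU: "X \<in> borel_measurable (uniform_measure M A)"
    unfolding measurable_cong_sets[OF sets_uniform_measure refl] by (rule X)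
  have mu: "real_distribution \<mu>" unfolding \<mu>_def using XU by (rule U.real_distribution_distr)
  interpret mu: cdf_distribution \<mu> using mu by (simp add: cdf_distribution_def)
  define I where "I v = Inf {x. v \<le> cdf \<mu> x}" for v
  define X' where "X' \<omega> = (if \<omega> \<in> A then I (V \<omega>) else X \<omega>)" for \<omega>
  have VR: "V \<in> measurable M (restrict_space borel {0<..<1})"
    using V01 Vm by (intro measurable_restrict_space2) auto
  have IVm: "(\<lambda>\<omega>. I (V \<omega>)) \<in> borel_measurable M"
    unfolding I_def using measurable_comp[OF VR mu.measurable_CI] by (simp add: comp_def)
  have X'm: "X' \<in> borel_measurable M"
    unfolding X'_def using IVm X A by (intro measurable_If_set) auto
  have X'A: "X' \<omega> = Inf {x. V \<omega> \<le> cdf \<mu> x}" if "\<omega> \<in> A" for \<omega>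
    using that by (simp add: X'_def I_def)
  have dM: "distr (uniform_measure M A) borel X' = \<mu>"
    using quantile_distr[OF mu finite_measure_axioms A PA V01 _ X'm X'A] Vd by blast
  have TX: "(\<integral>\<^sup>+\<omega>. f (X \<omega>) * indicator A \<omega> \<partial>M) = emeasure M A * (\<integral>\<^sup>+x. f x \<partial>\<mu>)"
    if "f \<in> borel_measurable borel" for f :: "real \<Rightarrow> ennreal"
    unfolding \<mu>_def using transfer_nn[OF X A eA that] .
  have TX': "(\<integral>\<^sup>+\<omega>. f (X' \<omega>) * indicator A \<omega> \<partial>M) = emeasure M A * (\<integral>\<^sup>+x. f x \<partial>\<mu>)"
    if "f \<in> borel_measurable borel" for f :: "real \<Rightarrow> ennreal"
    using transfer_nn[OF X'm A eA that] dM by simp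
  have X'Q: "X' \<in> borel_measurable Q"
    unfolding measurable_cong_sets[OF sQ refl] by (rule X'm)
  have AQ: "A \<in> sets Q" using A sQ by simp
  have TQ: "(\<integral>\<^sup>+\<omega>. f (X' \<omega>) * indicator A \<omega> \<partial>Q) = emeasure Q A * (\<integral>\<^sup>+x. f x \<partial>\<mu>)"
    if f: "f \<in> borel_measurable borel" for f :: "real \<Rightarrow> ennreal"
  proof (cases "measure Q A = 0")
    case True
    then have "A \<in> null_sets Q" using AQ by (simp add: null_sets_def Q.emeasure_eq_measure)
    then have "AE \<omega> in Q. \<omega> \<notin> A" by (rule AE_not_in)
    then have "(\<integral>\<^sup>+\<omega>. f (X' \<omega>) * indicator A \<omega> \<partial>Q) = (\<integral>\<^sup>+\<omega>. 0 \<partial>Q)"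
      by (intro nn_integral_cong_AE) (auto elim!: eventually_mono)
    moreover have "emeasure Q A = 0" using True by (simp add: Q.emeasure_eq_measure)
    ultimately show ?thesis by simp
  next
    case False
    then have QA: "0 < measure Q A" using measure_nonneg[of Q A] by linarith
    have eQA: "emeasure Q A \<noteq> 0" "emeasure Q A \<noteq> \<infinity>" using QA by (auto simp: Q.emeasure_eq_measure)
    have dQ: "distr (uniform_measure Q A) borel X' = \<mu>"
      using quantile_distr[OF mu Qfin AQ QA V01 _ X'Q X'A] Vd by blast
    show ?thesis using transfer_nn[OF X'Q AQ eQA f] dQ by simp
  qed
  have c0: "0 \<le> c" unfolding c_def using iS0[of A] PA by simp
  have cQ: "ennreal c * emeasure M A = emeasure Q A"
  proof -
    have "ennreal c * emeasure M A = ennreal (c * measure M A)"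
      using c0 by (simp add: emeasure_eq_measure ennreal_mult)
    also have "c * measure M A = (\<integral>\<omega>. Z \<omega> * indicator A \<omega> \<partial>M)" unfolding c_def using PA by simp
    finally show ?thesis using eQ[OF A] by simp
  qed
  show ?thesis
  proof (intro bexI[OF _ X'm] allI impI conjI)
    fix f :: "real \<Rightarrow> ennreal" assume f: "f \<in> borel_measurable borel"
    show "(\<integral>\<^sup>+\<omega>. f (X' \<omega>) * indicator A \<omega> \<partial>M) = (\<integral>\<^sup>+\<omega>. f (X \<omega>) * indicator A \<omega> \<partial>M)"
      using TX[OF f] TX'[OF f] by simp
    have "(\<integral>\<^sup>+\<omega>. ennreal (Z \<omega>) * (f (X' \<omega>) * indicator A \<omega>) \<partial>M) = (\<integral>\<^sup>+\<omega>. f (X' \<omega>) * indicator A \<omega> \<partial>Q)"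
      unfolding Q_def using Zm f X'm A by (intro nn_integral_density[symmetric]) auto
    also have "\<dots> = emeasure Q A * (\<integral>\<^sup>+x. f x \<partial>\<mu>)" using TQ[OF f] .
    also have "\<dots> = ennreal c * (emeasure M A * (\<integral>\<^sup>+x. f x \<partial>\<mu>))"
      using cQ by (simp add: mult.assoc[symmetric])
    also have "\<dots> = ennreal c * (\<integral>\<^sup>+\<omega>. f (X \<omega>) * indicator A \<omega> \<partial>M)" using TX[OF f] by simp
    finally show "(\<integral>\<^sup>+\<omega>. ennreal (Z \<omega>) * (f (X' \<omega>) * indicator A \<omega>) \<partial>M) = ennreal c * (\<integral>\<^sup>+\<omega>. f (X \<omega>) * indicator A \<omega> \<partial>M)" .
  qed
qed

lemma nn_split_countable:
  assumes h: "h \<in> borel_measurable M" and G: "\<And>j. G j \<in> sets M" and disj: "disjoint_family G"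
  shows "(\<integral>\<^sup>+\<omega>. h \<omega> \<partial>M) = (\<Sum>j. \<integral>\<^sup>+\<omega>. h \<omega> * indicator (G j) \<omega> \<partial>M) + (\<integral>\<^sup>+\<omega>. h \<omega> * indicator (space M - (\<Union>j. G j)) \<omega> \<partial>M)"
proof -
  have pt: "h \<omega> = (\<Sum>j. h \<omega> * indicator (G j) \<omega>) + h \<omega> * indicator (space M - (\<Union>j. G j)) \<omega>"
    if "\<omega> \<in> space M" for \<omega>
  proof -
    have "(\<Sum>j. h \<omega> * indicator (G j) \<omega>) = h \<omega> * (\<Sum>j. indicator (G j) \<omega>)"
      by (rule ennreal_suminf_cmult)
    also have "(\<Sum>j. indicator (G j) \<omega> :: ennreal) = indicator (\<Union>j. G j) \<omega>"
      by (rule suminf_indicator[OF disj])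
    finally show ?thesis using that by (auto simp: indicator_def)
  qed
  have "(\<integral>\<^sup>+\<omega>. h \<omega> \<partial>M) = (\<integral>\<^sup>+\<omega>. (\<Sum>j. h \<omega> * indicator (G j) \<omega>) + h \<omega> * indicator (space M - (\<Union>j. G j)) \<omega> \<partial>M)"
    using pt by (intro nn_integral_cong) auto
  also have "\<dots> = (\<integral>\<^sup>+\<omega>. (\<Sum>j. h \<omega> * indicator (G j) \<omega>) \<partial>M) + (\<integral>\<^sup>+\<omega>. h \<omega> * indicator (space M - (\<Union>j. G j)) \<omega> \<partial>M)"
    using h G by (intro nn_integral_add) auto
  also have "(\<integral>\<^sup>+\<omega>. (\<Sum>j. h \<omega> * indicator (G j) \<omega>) \<partial>M) = (\<Sum>j. \<integral>\<^sup>+\<omega>. h \<omega> * indicator (G j) \<omega> \<partial>M)"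
    using h G by (intro nn_integral_suminf) auto
  finally show ?thesis .
qed

lemma glue:
  fixes M :: "'a measure" and Z X :: "'a \<Rightarrow> real" and A :: "nat \<Rightarrow> 'a set"
  assumes P: "prob_space M" and atl: "atomless M" and Zd: "Z \<in> densities M"
    and Am: "\<And>j. A j \<in> sets M" and disj: "disjoint_family A" and X: "X \<in> borel_measurable M"
  defines "c \<equiv> \<lambda>j. (\<integral>\<omega>. Z \<omega> * indicator (A j) \<omega> \<partial>M) / measure M (A j)"
  defines "G \<equiv> \<lambda>j. if 0 < measure M (A j) then A j else {}"
  defines "Zc \<equiv> \<lambda>\<omega>. if \<omega> \<in> (\<Union>j. G j) then c (THE j. \<omega> \<in> G j) else Z \<omega>"
  shows "\<exists>X'\<in>borel_measurable M. distr M borel X' = distr M borel X \<and>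
   (\<forall>g::real\<Rightarrow>real. g \<in> borel_measurable borel \<longrightarrow> (\<forall>x. 0 \<le> g x) \<longrightarrow>
     (\<integral>\<^sup>+\<omega>. ennreal (Z \<omega> * g (X' \<omega>)) \<partial>M) = (\<integral>\<^sup>+\<omega>. ennreal (Zc \<omega> * g (X \<omega>)) \<partial>M))"
proof -
  interpret prob_space M by fact
  have Zm: "Z \<in> borel_measurable M" and Zpos: "AE \<omega> in M. 0 \<le> Z \<omega>"
    using Zd by (auto simp: densities_def)
  have Gm: "G j \<in> sets M" for j using Am by (simp add: G_def)
  have GA: "G j \<subseteq> A j" for j by (simp add: G_def)
  have disjG: "disjoint_family G" using disj GA unfolding disjoint_family_on_def by blast
  have THE: "(THE j. \<omega> \<in> G j) = i" if "\<omega> \<in> G i" for \<omega> i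
    using that disjG unfolding disjoint_family_on_def by blast
  have c0: "0 \<le> c j" for j
  proof -
    have "0 \<le> (\<integral>\<omega>. Z \<omega> * indicator (A j) \<omega> \<partial>M)"
      using Zpos by (intro integral_nonneg_AE) (auto elim!: eventually_mono simp: indicator_def)
    then show ?thesis unfolding c_def by simp
  qed
  define goodY where "goodY j Y \<longleftrightarrow> Y \<in> borel_measurable M \<and> (\<forall>f::real\<Rightarrow>ennreal. f \<in> borel_measurable borel \<longrightarrow>
     (\<integral>\<^sup>+\<omega>. f (Y \<omega>) * indicator (G j) \<omega> \<partial>M) = (\<integral>\<^sup>+\<omega>. f (X \<omega>) * indicator (G j) \<omega> \<partial>M) \<and>
     (\<integral>\<^sup>+\<omega>. ennreal (Z \<omega>) * (f (Y \<omega>) * indicator (G j) \<omega>) \<partial>M) = ennreal (c j) * (\<integral>\<^sup>+\<omega>. f (X \<omega>) * indicator (G j) \<omega> \<partial>M))" for j Y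
  have exY: "\<exists>Y. goodY j Y" for j
  proof (cases "0 < measure M (A j)")
    case True
    then show ?thesis using rearr1[OF P atl Zd Am True X] unfolding goodY_def G_def c_def by auto
  next
    case False
    then show ?thesis unfolding goodY_def G_def using X by (intro exI[of _ X]) auto
  qed
  define Y where "Y j = (SOME Y. goodY j Y)" for j
  have Yp: "goodY j (Y j)" for j unfolding Y_def by (rule someI_ex[OF exY])
  have Ym: "Y j \<in> borel_measurable M" for j using Yp[of j] by (simp add: goodY_def)
  define X' where "X' \<omega> = (if \<omega> \<in> (\<Union>j. G j) then Y (THE j. \<omega> \<in> G j) \<omega> else X \<omega>)" for \<omega>
  have X'G: "X' \<omega> = Y i \<omega>" if "\<omega> \<in> G i" for \<omega> i using that THE[OF that] by (auto simp: X'_def)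
  have X'O: "X' \<omega> = X \<omega>" if "\<omega> \<notin> (\<Union>j. G j)" for \<omega> using that by (simp add: X'_def)
  have ZcG: "Zc \<omega> = c i" if "\<omega> \<in> G i" for \<omega> i using that THE[OF that] by (auto simp: Zc_def)
  have ZcO: "Zc \<omega> = Z \<omega>" if "\<omega> \<notin> (\<Union>j. G j)" for \<omega> using that by (simp add: Zc_def)
  define R where "R = space M - (\<Union>j. G j)"
  have Rm: "R \<in> sets M" unfolding R_def using Gm by auto
  define S where "S n \<omega> = (\<Sum>j<n. Y j \<omega> * indicator (G j) \<omega>) + X \<omega> * indicator R \<omega>" for n \<omega>
  have Sm: "S n \<in> borel_measurable M" for n unfolding S_def using Ym Gm X Rm by measurable
  have Slim: "(\<lambda>n. S n \<omega>) \<longlonglongrightarrow> X' \<omega>" if "\<omega> \<in> space M" for \<omega>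
  proof (cases "\<omega> \<in> (\<Union>j. G j)")
    case True
    then obtain i where i: "\<omega> \<in> G i" by auto
    have nG: "\<omega> \<notin> G j" if "j \<noteq> i" for j using disjG i that unfolding disjoint_family_on_def by blast
    have SnS: "S n \<omega> = Y i \<omega>" if "i < n" for n
    proof -
      have "(\<Sum>j<n. Y j \<omega> * indicator (G j) \<omega>) = (\<Sum>j<n. if j = i then Y i \<omega> else 0)"
        using i nG by (intro sum.cong) (auto simp: indicator_def)
      also have "\<dots> = Y i \<omega>" using that by (simp add: sum.delta)
      finally have 1: "(\<Sum>j<n. Y j \<omega> * indicator (G j) \<omega>) = Y i \<omega>" .
      have 2: "X \<omega> * indicator R \<omega> = 0" using i by (auto simp: R_def indicator_def)
      show ?thesis unfolding S_def using 1 2 by simp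
    qed
    have "eventually (\<lambda>n. S n \<omega> = X' \<omega>) sequentially"
      by (rule eventually_mono[OF eventually_gt_at_top[of i]]) (use SnS X'G[OF i] in auto)
    then show ?thesis by (rule tendsto_eventually)
  next
    case False
    then have "S n \<omega> = X \<omega>" for n using that by (simp add: S_def R_def indicator_def)
    then show ?thesis using X'O[OF False] by simp
  qed
  have X'm: "X' \<in> borel_measurable M" by (rule borel_measurable_LIMSEQ_real[OF Slim Sm])
  show ?thesis
  proof (intro bexI[OF _ X'm] conjI allI impI)
    show "distr M borel X' = distr M borel X"
    proof (rule measure_eqI)
      fix T :: "real set" assume "T \<in> sets (distr M borel X')"
      then have Tb: "T \<in> sets borel" by simp
      have fT: "indicator T \<in> borel_measurable borel" using Tb by simp
      have "emeasure (distr M borel X') T = (\<integral>\<^sup>+\<omega>. indicator T (X' \<omega>) \<partial>M)"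
        by (rule emeasure_distr_nn[OF X'm Tb])
      also have "\<dots> = (\<Sum>j. \<integral>\<^sup>+\<omega>. indicator T (X' \<omega>) * indicator (G j) \<omega> \<partial>M) + (\<integral>\<^sup>+\<omega>. indicator T (X' \<omega>) * indicator R \<omega> \<partial>M)"
        unfolding R_def using X'm Tb Gm disjG by (intro nn_split_countable) auto
      also have "\<dots> = (\<Sum>j. \<integral>\<^sup>+\<omega>. indicator T (X \<omega>) * indicator (G j) \<omega> \<partial>M) + (\<integral>\<^sup>+\<omega>. indicator T (X \<omega>) * indicator R \<omega> \<partial>M)"
      proof -
        have "(\<integral>\<^sup>+\<omega>. indicator T (X' \<omega>) * indicator (G j) \<omega> \<partial>M) = (\<integral>\<^sup>+\<omega>. indicator T (X \<omega>) * indicator (G j) \<omega> \<partial>M)" for j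
        proof -
          have "(\<integral>\<^sup>+\<omega>. indicator T (X' \<omega>) * indicator (G j) \<omega> \<partial>M) = (\<integral>\<^sup>+\<omega>. indicator T (Y j \<omega>) * indicator (G j) \<omega> \<partial>M)"
            using X'G by (intro nn_integral_cong) (auto simp: indicator_def)
          also have "\<dots> = (\<integral>\<^sup>+\<omega>. indicator T (X \<omega>) * indicator (G j) \<omega> \<partial>M)"
            using Yp[of j] fT unfolding goodY_def by blast
          finally show ?thesis .
        qed
        moreover have "(\<integral>\<^sup>+\<omega>. indicator T (X' \<omega>) * indicator R \<omega> \<partial>M) = (\<integral>\<^sup>+\<omega>. indicator T (X \<omega>) * indicator R \<omega> \<partial>M)"
          using X'O by (intro nn_integral_cong) (auto simp: indicator_def R_def)
        ultimately show ?thesis by simp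
      qed
      also have "\<dots> = (\<integral>\<^sup>+\<omega>. indicator T (X \<omega>) \<partial>M)"
        unfolding R_def using X Tb Gm disjG by (intro nn_split_countable[symmetric]) auto
      also have "\<dots> = emeasure (distr M borel X) T"
        by (rule emeasure_distr_nn[OF X Tb, symmetric])
      finally show "emeasure (distr M borel X') T = emeasure (distr M borel X) T" .
    qed simp
  next
    fix g :: "real \<Rightarrow> real" assume gm: "g \<in> borel_measurable borel" and g0: "\<forall>x. 0 \<le> g x"
    have ge: "(\<lambda>x. ennreal (g x)) \<in> borel_measurable borel" using gm by measurable
    have Zcm: "Zc \<in> borel_measurable M"
    proof -
      define T where "T n \<omega> = (\<Sum>j<n. c j * indicator (G j) \<omega>) + Z \<omega> * indicator R \<omega>" for n \<omega>
      have Tm: "T n \<in> borel_measurable M" for n unfolding T_def using Gm Zm Rm by measurable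
      have Tlim: "(\<lambda>n. T n \<omega>) \<longlonglongrightarrow> Zc \<omega>" if "\<omega> \<in> space M" for \<omega>
      proof (cases "\<omega> \<in> (\<Union>j. G j)")
        case True
        then obtain i where i: "\<omega> \<in> G i" by auto
        have nG: "\<omega> \<notin> G j" if "j \<noteq> i" for j using disjG i that unfolding disjoint_family_on_def by blast
        have SnT: "T n \<omega> = c i" if "i < n" for n
        proof -
          have "(\<Sum>j<n. c j * indicator (G j) \<omega>) = (\<Sum>j<n. if j = i then c i else 0)"
            using i nG by (intro sum.cong) (auto simp: indicator_def)
          also have "\<dots> = c i" using that by (simp add: sum.delta)
          finally have 1: "(\<Sum>j<n. c j * indicator (G j) \<omega>) = c i" .
      have 2: "Z \<omega> * indicator R \<omega> = 0" using i by (auto simp: R_def indicator_def)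
      show ?thesis unfolding T_def using 1 2 by simp
        qed
        have "eventually (\<lambda>n. T n \<omega> = Zc \<omega>) sequentially"
          by (rule eventually_mono[OF eventually_gt_at_top[of i]]) (use SnT ZcG[OF i] in auto)
        then show ?thesis by (rule tendsto_eventually)
      next
        case False
        then have "T n \<omega> = Z \<omega>" for n using that by (simp add: T_def R_def indicator_def)
        then show ?thesis using ZcO[OF False] by simp
      qed
      show ?thesis by (rule borel_measurable_LIMSEQ_real[OF Tlim Tm])
    qed
    have m1: "(\<lambda>\<omega>. ennreal (Z \<omega> * g (X' \<omega>))) \<in> borel_measurable M" using Zm gm X'm by measurable
    have m2: "(\<lambda>\<omega>. ennreal (Zc \<omega> * g (X \<omega>))) \<in> borel_measurable M" using Zcm gm X by measurable
    have partG: "(\<integral>\<^sup>+\<omega>. ennreal (Z \<omega> * g (X' \<omega>)) * indicator (G j) \<omega> \<partial>M) = (\<integral>\<^sup>+\<omega>. ennreal (Zc \<omega> * g (X \<omega>)) * indicator (G j) \<omega> \<partial>M)" for j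
    proof -
      have "(\<integral>\<^sup>+\<omega>. ennreal (Z \<omega> * g (X' \<omega>)) * indicator (G j) \<omega> \<partial>M) = (\<integral>\<^sup>+\<omega>. ennreal (Z \<omega>) * (ennreal (g (Y j \<omega>)) * indicator (G j) \<omega>) \<partial>M)"
        using X'G g0 by (intro nn_integral_cong) (auto simp: indicator_def ennreal_mult'')
      also have "\<dots> = ennreal (c j) * (\<integral>\<^sup>+\<omega>. ennreal (g (X \<omega>)) * indicator (G j) \<omega> \<partial>M)"
        using Yp[of j] ge unfolding goodY_def by blast
      also have "\<dots> = (\<integral>\<^sup>+\<omega>. ennreal (c j) * (ennreal (g (X \<omega>)) * indicator (G j) \<omega>) \<partial>M)"
        using gm X Gm by (intro nn_integral_cmult[symmetric]) auto
      also have "\<dots> = (\<integral>\<^sup>+\<omega>. ennreal (Zc \<omega> * g (X \<omega>)) * indicator (G j) \<omega> \<partial>M)"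
        using ZcG c0 by (intro nn_integral_cong) (auto simp: indicator_def ennreal_mult')
      finally show ?thesis .
    qed
    have partR: "(\<integral>\<^sup>+\<omega>. ennreal (Z \<omega> * g (X' \<omega>)) * indicator R \<omega> \<partial>M) = (\<integral>\<^sup>+\<omega>. ennreal (Zc \<omega> * g (X \<omega>)) * indicator R \<omega> \<partial>M)"
      using X'O ZcO by (intro nn_integral_cong) (auto simp: indicator_def R_def)
    show "(\<integral>\<^sup>+\<omega>. ennreal (Z \<omega> * g (X' \<omega>)) \<partial>M) = (\<integral>\<^sup>+\<omega>. ennreal (Zc \<omega> * g (X \<omega>)) \<partial>M)"
      using nn_split_countable[OF m1 Gm disjG] nn_split_countable[OF m2 Gm disjG] partG partR
      unfolding R_def by simp
  qed
qed

lemma avg_util: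
  fixes M :: "'a measure" and Z :: "'a \<Rightarrow> real" and A :: "nat \<Rightarrow> 'a set"
  assumes P: "prob_space M" and atl: "atomless M" and li: "law_invariant M u"
    and Zd: "Z \<in> determining_set M u"
    and Am: "\<And>j. A j \<in> sets M" and disj: "disjoint_family A"
  defines "c \<equiv> \<lambda>j. (\<integral>\<omega>. Z \<omega> * indicator (A j) \<omega> \<partial>M) / measure M (A j)"
  defines "G \<equiv> \<lambda>j. if 0 < measure M (A j) then A j else {}"
  defines "Zc \<equiv> \<lambda>\<omega>. if \<omega> \<in> (\<Union>j. G j) then c (THE j. \<omega> \<in> G j) else Z \<omega>"
  shows "X \<in> borel_measurable M \<Longrightarrow> u X \<le> EQ M Zc X"
proof -
  assume X: "X \<in> borel_measurable M"
  have Zden: "Z \<in> densities M" and ZD: "\<And>X. X \<in> borel_measurable M \<Longrightarrow> u X \<le> EQ M Z X"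
    using Zd by (auto simp: determining_set_def)
  obtain X' where X'm: "X' \<in> borel_measurable M" and dX: "distr M borel X' = distr M borel X"
    and I: "\<And>g::real\<Rightarrow>real. g \<in> borel_measurable borel \<Longrightarrow> (\<forall>x. 0 \<le> g x) \<Longrightarrow>
     (\<integral>\<^sup>+\<omega>. ennreal (Z \<omega> * g (X' \<omega>)) \<partial>M) = (\<integral>\<^sup>+\<omega>. ennreal (Zc \<omega> * g (X \<omega>)) \<partial>M)"
    using glue[OF P atl Zden Am disj X] unfolding c_def G_def Zc_def by blast
  have "u X = u X'" using li X X'm dX unfolding law_invariant_def by metis
  also have "\<dots> \<le> EQ M Z X'" by (rule ZD[OF X'm])
  also have "EQ M Z X' = EQ M Zc X"
  proof -
    have g1: "(\<lambda>x::real. max x 0) \<in> borel_measurable borel" by measurable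
    have g2: "(\<lambda>x::real. max (- x) 0) \<in> borel_measurable borel" by measurable
    have e1: "(\<integral>\<^sup>+\<omega>. ennreal (Z \<omega> * max (X' \<omega>) 0) \<partial>M) = (\<integral>\<^sup>+\<omega>. ennreal (Zc \<omega> * max (X \<omega>) 0) \<partial>M)"
      using I[OF g1] by simp
    have e2: "(\<integral>\<^sup>+\<omega>. ennreal (Z \<omega> * max (- X' \<omega>) 0) \<partial>M) = (\<integral>\<^sup>+\<omega>. ennreal (Zc \<omega> * max (- X \<omega>) 0) \<partial>M)"
      using I[OF g2] by simp
    show ?thesis unfolding EQ_def Let_def e1 e2 ..
  qed
  finally show ?thesis .
qed

lemma EQ_approx:
  fixes W :: "'a \<Rightarrow> real" and Zk :: "nat \<Rightarrow> 'a \<Rightarrow> real" and X :: "'a \<Rightarrow> real"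
  assumes Wm: "W \<in> borel_measurable M" and Zkm: "\<And>k. Zk k \<in> borel_measurable M"
    and Xm: "X \<in> borel_measurable M"
    and bnd: "\<And>k. AE \<omega> in M. W \<omega> \<le> (1 + 1 / Suc k) * Zk k \<omega> \<and> Zk k \<omega> \<le> (1 + 1 / Suc k) * W \<omega>"
    and ule: "\<And>k. v \<le> EQ M (Zk k) X"
  shows "v \<le> EQ M W X"
proof -
  define b where "b k = 1 + 1 / real (Suc k)" for k
  have b1: "1 \<le> b k" for k by (simp add: b_def)
  have b0: "0 \<le> b k" for k using b1[of k] by linarith
  define pW where "pW = (\<integral>\<^sup>+\<omega>. ennreal (W \<omega> * max (X \<omega>) 0) \<partial>M)"
  define nW where "nW = (\<integral>\<^sup>+\<omega>. ennreal (W \<omega> * max (- X \<omega>) 0) \<partial>M)"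
  define pk where "pk k = (\<integral>\<^sup>+\<omega>. ennreal (Zk k \<omega> * max (X \<omega>) 0) \<partial>M)" for k
  define nk where "nk k = (\<integral>\<^sup>+\<omega>. ennreal (Zk k \<omega> * max (- X \<omega>) 0) \<partial>M)" for k
  have EQW: "EQ M W X = (if enn2ereal nW = \<infinity> then - \<infinity> else enn2ereal pW - enn2ereal nW)"
    unfolding EQ_def Let_def pW_def nW_def ..
  have EQk: "EQ M (Zk k) X = (if enn2ereal (nk k) = \<infinity> then - \<infinity> else enn2ereal (pk k) - enn2ereal (nk k))" for k
    unfolding EQ_def Let_def pk_def nk_def ..
  have pk_le: "pk k \<le> ennreal (b k) * pW" for k
  proof -
    have "pk k \<le> (\<integral>\<^sup>+\<omega>. ennreal (b k) * ennreal (W \<omega> * max (X \<omega>) 0) \<partial>M)"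
      unfolding pk_def
    proof (rule nn_integral_mono_AE)
      show "AE \<omega> in M. ennreal (Zk k \<omega> * max (X \<omega>) 0) \<le> ennreal (b k) * ennreal (W \<omega> * max (X \<omega>) 0)"
        using bnd[of k]
      proof eventually_elim
        case (elim \<omega>)
        have "Zk k \<omega> * max (X \<omega>) 0 \<le> (b k * W \<omega>) * max (X \<omega>) 0"
          using elim by (intro mult_right_mono) (auto simp: b_def)
        then have "ennreal (Zk k \<omega> * max (X \<omega>) 0) \<le> ennreal (b k * (W \<omega> * max (X \<omega>) 0))"
          by (intro ennreal_leI) (simp add: mult.assoc)
        then show ?case using b0[of k] by (simp add: ennreal_mult')
      qed
    qed
    also have "\<dots> = ennreal (b k) * pW" unfolding pW_def using Wm Xm by (intro nn_integral_cmult) auto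
    finally show ?thesis .
  qed
  have nW_le: "nW \<le> ennreal (b k) * nk k" for k
  proof -
    have "nW \<le> (\<integral>\<^sup>+\<omega>. ennreal (b k) * ennreal (Zk k \<omega> * max (- X \<omega>) 0) \<partial>M)"
      unfolding nW_def
    proof (rule nn_integral_mono_AE)
      show "AE \<omega> in M. ennreal (W \<omega> * max (- X \<omega>) 0) \<le> ennreal (b k) * ennreal (Zk k \<omega> * max (- X \<omega>) 0)"
        using bnd[of k]
      proof eventually_elim
        case (elim \<omega>)
        have "W \<omega> * max (- X \<omega>) 0 \<le> (b k * Zk k \<omega>) * max (- X \<omega>) 0"
          using elim by (intro mult_right_mono) (auto simp: b_def)
        then have "ennreal (W \<omega> * max (- X \<omega>) 0) \<le> ennreal (b k * (Zk k \<omega> * max (- X \<omega>) 0))"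
          by (intro ennreal_leI) (simp add: mult.assoc)
        then show ?case using b0[of k] by (simp add: ennreal_mult')
      qed
    qed
    also have "\<dots> = ennreal (b k) * nk k" unfolding nk_def using Zkm Xm by (intro nn_integral_cmult) auto
    finally show ?thesis .
  qed
  show ?thesis
  proof (cases "nW = top")
    case True
    then have "nk 0 = top" using nW_le[of 0] by (auto simp: ennreal_mult_eq_top_iff top_unique)
    then have "v = - \<infinity>" using ule[of 0] EQk[of 0] by simp
    then show ?thesis by simp
  next
    case nfin: False
    show ?thesis
    proof (cases "pW = top")
      case True
      then show ?thesis using nfin EQW by (simp add: top_unique less_top)
    next
      case pfin: False
      obtain p where p: "pW = ennreal p" "0 \<le> p" using pfin by (cases pW) auto
      obtain n where n: "nW = ennreal n" "0 \<le> n" using nfin by (cases nW) auto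
      have EQWr: "EQ M W X = ereal (p - n)" using EQW p n by simp
      show ?thesis
      proof (cases "v = - \<infinity>")
        case True then show ?thesis by simp
      next
        case vne: False
        have vle: "v \<le> ereal (b k * p - n / b k)" for k
        proof (cases "nk k = top")
          case True
          then have "v = - \<infinity>" using ule[of k] EQk[of k] by simp
          with vne show ?thesis by simp
        next
          case False
          then obtain nn where nn: "nk k = ennreal nn" "0 \<le> nn" by (cases "nk k") auto
          have "pk k \<le> ennreal (b k * p)" using pk_le[of k] p b0[of k] by (simp add: ennreal_mult')
          then have pkle: "pk k \<le> ennreal (b k * p)" .
          then have "pk k \<noteq> top" by (auto simp: top_unique)
          then obtain pp where pp0: "pk k = ennreal pp" "0 \<le> pp" by (cases "pk k") auto
          have "pp \<le> b k * p" using pkle pp0 b0[of k] p by (simp add: ennreal_le_iff)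
          note pp = pp0 this
          have "ennreal n \<le> ennreal (b k * nn)" using nW_le[of k] n nn b0[of k] by (simp add: ennreal_mult')
          then have "n \<le> b k * nn" using b0[of k] nn by (simp add: ennreal_le_iff)
          then have "n / b k \<le> nn" using b1[of k] by (simp add: divide_le_eq mult.commute)
          then have "pp - nn \<le> b k * p - n / b k" using pp by linarith
          moreover have "EQ M (Zk k) X = ereal (pp - nn)" using EQk[of k] pp nn by simp
          ultimately show ?thesis using ule[of k] by (metis ereal_less_eq(3) order_trans)
        qed
        have lim: "(\<lambda>k. b k * p - n / b k) \<longlonglongrightarrow> 1 * p - n / 1"
        proof -
          have "(\<lambda>k. b k) \<longlonglongrightarrow> 1 + 0" unfolding b_def
            by (intro tendsto_add tendsto_const) (rule LIMSEQ_Suc[OF lim_const_over_n[of 1]])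
          then have bl: "(\<lambda>k. b k) \<longlonglongrightarrow> 1" by simp
          show ?thesis by (intro tendsto_intros bl) auto
        qed
        have "v \<le> ereal (1 * p - n / 1)"
          by (rule LIMSEQ_le_const[OF tendsto_ereal[OF lim]]) (use vle in auto)
        then show ?thesis using EQWr by simp
      qed
    qed
  qed
qed

lemma Zc_meas:
  fixes Z :: "'a \<Rightarrow> real" and c :: "nat \<Rightarrow> real"
  assumes Zm: "Z \<in> borel_measurable M" and Gm: "\<And>j. G j \<in> sets M" and disjG: "disjoint_family G"
  shows "(\<lambda>\<omega>. if \<omega> \<in> (\<Union>j. G j) then c (THE j. \<omega> \<in> G j) else Z \<omega>) \<in> borel_measurable M"
proof -
  define Zc where "Zc = (\<lambda>\<omega>. if \<omega> \<in> (\<Union>j. G j) then c (THE j. \<omega> \<in> G j) else Z \<omega>)"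
  have THE: "(THE j. \<omega> \<in> G j) = i" if "\<omega> \<in> G i" for \<omega> i
    using that disjG unfolding disjoint_family_on_def by blast
  have ZcG: "Zc \<omega> = c i" if "\<omega> \<in> G i" for \<omega> i using that THE[OF that] by (auto simp: Zc_def)
  have ZcO: "Zc \<omega> = Z \<omega>" if "\<omega> \<notin> (\<Union>j. G j)" for \<omega> using that by (simp add: Zc_def)
  define R where "R = space M - (\<Union>j. G j)"
  have Rm: "R \<in> sets M" unfolding R_def using Gm by auto
  define T where "T n \<omega> = (\<Sum>j<n. c j * indicator (G j) \<omega>) + Z \<omega> * indicator R \<omega>" for n \<omega>
  have Tm: "T n \<in> borel_measurable M" for n unfolding T_def using Gm Zm Rm by measurable
  have Tlim: "(\<lambda>n. T n \<omega>) \<longlonglongrightarrow> Zc \<omega>" if "\<omega> \<in> space M" for \<omega>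
  proof (cases "\<omega> \<in> (\<Union>j. G j)")
    case True
    then obtain i where i: "\<omega> \<in> G i" by auto
    have nG: "\<omega> \<notin> G j" if "j \<noteq> i" for j using disjG i that unfolding disjoint_family_on_def by blast
    have SnT: "T n \<omega> = c i" if "i < n" for n
    proof -
      have "(\<Sum>j<n. c j * indicator (G j) \<omega>) = (\<Sum>j<n. if j = i then c i else 0)"
        using i nG by (intro sum.cong) (auto simp: indicator_def)
      also have "\<dots> = c i" using that by (simp add: sum.delta)
      finally have 1: "(\<Sum>j<n. c j * indicator (G j) \<omega>) = c i" .
      have 2: "Z \<omega> * indicator R \<omega> = 0" using i by (auto simp: R_def indicator_def)
      show ?thesis unfolding T_def using 1 2 by simp
    qed
    have "eventually (\<lambda>n. T n \<omega> = Zc \<omega>) sequentially"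
      by (rule eventually_mono[OF eventually_gt_at_top[of i]]) (use SnT ZcG[OF i] in auto)
    then show ?thesis by (rule tendsto_eventually)
  next
    case False
    then have "T n \<omega> = Z \<omega>" for n using that by (simp add: T_def R_def indicator_def)
    then show ?thesis using ZcO[OF False] by simp
  qed
  show ?thesis unfolding Zc_def[symmetric] by (rule borel_measurable_LIMSEQ_real[OF Tlim Tm])
qed

lemma band_approx:
  fixes M :: "'a measure" and Z W :: "'a \<Rightarrow> real" and F :: "'a measure"
  assumes P: "prob_space M" and atl: "atomless M" and li: "law_invariant M u"
    and Zd: "Z \<in> determining_set M u"
    and subF: "sets F \<subseteq> sets M" "space F = space M"
    and WF: "W \<in> borel_measurable F" and Wint: "integrable M W" and Wpos: "AE \<omega> in M. 0 \<le> W \<omega>"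
    and tower: "\<And>B. B \<in> sets F \<Longrightarrow> (\<integral>\<omega>. Z \<omega> * indicator B \<omega> \<partial>M) = (\<integral>\<omega>. W \<omega> * indicator B \<omega> \<partial>M)"
    and b: "1 < b"
  shows "\<exists>Zc\<in>borel_measurable M. (\<forall>X\<in>borel_measurable M. u X \<le> EQ M Zc X) \<and>
     (AE \<omega> in M. W \<omega> \<le> b * Zc \<omega> \<and> Zc \<omega> \<le> b * W \<omega>)"
proof -
  interpret prob_space M by fact
  have Zden: "Z \<in> densities M" using Zd by (auto simp: determining_set_def)
  have Zm: "Z \<in> borel_measurable M" using Zden by (auto simp: densities_def)
  have WM: "W \<in> borel_measurable M"
    using WF subF measurable_mono[of borel borel F M] by auto
  define A where "A j = (if j = 0 then {\<omega>\<in>space M. W \<omega> \<le> 0}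
      else {\<omega>\<in>space M. 0 < W \<omega> \<and> floor (log b (W \<omega>)) = int_decode (j - 1)})" for j
  have AF: "A j \<in> sets F" for j
  proof -
    have "{\<omega>\<in>space F. W \<omega> \<le> 0} \<in> sets F" using WF by measurable
    moreover have "{\<omega>\<in>space F. 0 < W \<omega> \<and> floor (log b (W \<omega>)) = int_decode (j - 1)} \<in> sets F"
      using WF by measurable
    ultimately show ?thesis unfolding A_def subF(2) by simp
  qed
  have Am: "A j \<in> sets M" for j using AF subF by auto
  have disj: "disjoint_family A"
    unfolding disjoint_family_on_def
  proof (intro ballI impI)
    fix i j :: nat assume ij: "i \<noteq> j"
    show "A i \<inter> A j = {}"
    proof (cases "i = 0 \<or> j = 0")
      case True then show ?thesis using ij by (auto simp: A_def)
    next
      case False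
      then have "int_decode (i - 1) \<noteq> int_decode (j - 1)"
        using ij inj_int_decode[of UNIV] by (metis Suc_pred' inj_eq neq0_conv)
      then show ?thesis using False by (auto simp: A_def)
    qed
  qed
  define c where "c = (\<lambda>j. (\<integral>\<omega>. Z \<omega> * indicator (A j) \<omega> \<partial>M) / measure M (A j))"
  define G where "G = (\<lambda>j. if 0 < measure M (A j) then A j else {})"
  define Zc where "Zc = (\<lambda>\<omega>. if \<omega> \<in> (\<Union>j. G j) then c (THE j. \<omega> \<in> G j) else Z \<omega>)"
  have Gm: "G j \<in> sets M" for j using Am by (simp add: G_def)
  have disjG: "disjoint_family G" using disj unfolding disjoint_family_on_def G_def by auto
  have Zcm: "Zc \<in> borel_measurable M" unfolding Zc_def by (rule Zc_meas[OF Zm Gm disjG])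
  have util: "\<forall>X\<in>borel_measurable M. u X \<le> EQ M Zc X"
    using avg_util[OF P atl li Zd Am disj] unfolding Zc_def G_def c_def by blast
  have THE: "(THE j. \<omega> \<in> G j) = i" if "\<omega> \<in> G i" for \<omega> i
    using that disjG unfolding disjoint_family_on_def by blast
  have ZcG: "Zc \<omega> = c i" if "\<omega> \<in> G i" for \<omega> i using that THE[OF that] by (auto simp: Zc_def)
  have cW: "c j = (\<integral>\<omega>. W \<omega> * indicator (A j) \<omega> \<partial>M) / measure M (A j)" for j
    unfolding c_def using tower[OF AF] by simp
  have bandb: "W \<omega> \<le> b * c j \<and> c j \<le> b * W \<omega>" if "\<omega> \<in> A j" "0 < measure M (A j)" "0 \<le> W \<omega>" for \<omega> j
  proof (cases "j = 0")
    case True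
    then have W0: "W \<omega> = 0" using that by (auto simp: A_def)
    have "(\<integral>\<omega>. W \<omega> * indicator (A 0) \<omega> \<partial>M) = (\<integral>\<omega>. 0 \<partial>M)"
    proof (rule integral_cong_AE)
      show "AE \<omega> in M. W \<omega> * indicator (A 0) \<omega> = 0"
        using Wpos by eventually_elim (auto simp: A_def indicator_def)
    qed (use WM Am in auto)
    then have "c j = 0" using True cW by simp
    then show ?thesis using W0 by simp
  next
    case False
    define m where "m = int_decode (j - 1)"
    have band: "b powr m \<le> W x \<and> W x < b powr (m + 1)" if "x \<in> A j" for x
    proof -
      have x: "0 < W x" "floor (log b (W x)) = m" using that False by (auto simp: A_def m_def)
      then have l: "m \<le> log b (W x)" "log b (W x) < m + 1" by (auto simp: floor_eq_iff)
      have "b powr m \<le> b powr (log b (W x))" using l b by (intro powr_mono) auto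
      moreover have "b powr (log b (W x)) < b powr (m + 1)" using l b by (intro powr_less_mono) auto
      ultimately show ?thesis using x b by simp
    qed
    have PA: "0 < measure M (A j)" by fact
    have int1: "integrable M (\<lambda>x. W x * indicator (A j) x)" using Wint Am by (intro integrable_real_mult_indicator) auto
    have lo: "b powr m * measure M (A j) \<le> (\<integral>x. W x * indicator (A j) x \<partial>M)"
    proof -
      have "(\<integral>x. b powr m * indicator (A j) x \<partial>M) \<le> (\<integral>x. W x * indicator (A j) x \<partial>M)"
      proof (rule integral_mono)
        show "integrable M (\<lambda>x. b powr m * indicator (A j) x)"
          using Am by (intro integrable_mult_right) (simp add: integrable_indicator_iff less_top[symmetric])
      qed (use band int1 in \<open>auto simp: indicator_def\<close>)
      then show ?thesis using Am by simp
    qed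
    have hi: "(\<integral>x. W x * indicator (A j) x \<partial>M) \<le> b powr (m + 1) * measure M (A j)"
    proof -
      have "(\<integral>x. W x * indicator (A j) x \<partial>M) \<le> (\<integral>x. b powr (m + 1) * indicator (A j) x \<partial>M)"
      proof (rule integral_mono)
        show "integrable M (\<lambda>x. b powr (m + 1) * indicator (A j) x)"
          using Am by (intro integrable_mult_right) (simp add: integrable_indicator_iff less_top[symmetric])
      qed (use band int1 in \<open>auto simp: indicator_def less_imp_le\<close>)
      then show ?thesis using Am by simp
    qed
    have clo: "b powr m \<le> c j" using lo PA unfolding cW by (simp add: field_simps)
    have chi: "c j \<le> b powr (m + 1)" using hi PA unfolding cW by (simp add: field_simps)
    have bm: "b powr (m + 1) = b * b powr m" using b by (simp add: powr_add)
    have w: "b powr m \<le> W \<omega>" "W \<omega> < b powr (m + 1)" using band[OF that(1)] by auto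
    have "W \<omega> \<le> b * c j" using w clo bm b by (smt (verit) mult_left_mono)
    moreover have "c j \<le> b * W \<omega>" using w chi bm b by (smt (verit) mult_left_mono)
    ultimately show ?thesis by simp
  qed
  have cover: "\<exists>j. \<omega> \<in> A j" if "\<omega> \<in> space M" for \<omega>
  proof (cases "W \<omega> \<le> 0")
    case True then show ?thesis using that by (intro exI[of _ 0]) (simp add: A_def)
  next
    case False
    then show ?thesis using that
      by (intro exI[of _ "Suc (int_encode (floor (log b (W \<omega>))))"]) (simp add: A_def)
  qed
  have AEpos: "AE \<omega> in M. \<forall>j. measure M (A j) = 0 \<longrightarrow> \<omega> \<notin> A j"
  proof (subst AE_all_countable, intro allI)
    fix j
    show "AE \<omega> in M. measure M (A j) = 0 \<longrightarrow> \<omega> \<notin> A j"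
    proof (cases "measure M (A j) = 0")
      case True
      then have "A j \<in> null_sets M" using Am by (simp add: null_sets_def emeasure_eq_measure)
      then show ?thesis using AE_not_in by (auto elim!: eventually_mono)
    qed simp
  qed
  have "AE \<omega> in M. W \<omega> \<le> b * Zc \<omega> \<and> Zc \<omega> \<le> b * W \<omega>"
    using AEpos Wpos AE_space
  proof eventually_elim
    case (elim \<omega>)
    obtain j where j: "\<omega> \<in> A j" using cover elim by blast
    have "measure M (A j) \<noteq> 0" using elim j by blast
    then have PA: "0 < measure M (A j)" using measure_nonneg[of M "A j"] by linarith
    then have "\<omega> \<in> G j" using j by (simp add: G_def)
    then have "Zc \<omega> = c j" by (rule ZcG)
    then show ?case using bandb[OF j PA] elim by simp
  qed
  then show ?thesis using Zcm util by blast
qed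

lemma W_in_D:
  fixes M :: "'a measure" and Z W :: "'a \<Rightarrow> real" and F :: "'a measure"
  assumes P: "prob_space M" and atl: "atomless M" and li: "law_invariant M u"
    and Zd: "Z \<in> determining_set M u"
    and subF: "sets F \<subseteq> sets M" "space F = space M"
    and WF: "W \<in> borel_measurable F" and Wden: "W \<in> densities M"
    and tower: "\<And>B. B \<in> sets F \<Longrightarrow> (\<integral>\<omega>. Z \<omega> * indicator B \<omega> \<partial>M) = (\<integral>\<omega>. W \<omega> * indicator B \<omega> \<partial>M)"
  shows "W \<in> determining_set M u"
proof -
  have Wm: "W \<in> borel_measurable M" and Wint: "integrable M W" and Wpos: "AE \<omega> in M. 0 \<le> W \<omega>"
    using Wden by (auto simp: densities_def)
  have "\<forall>k. \<exists>Zc\<in>borel_measurable M. (\<forall>X\<in>borel_measurable M. u X \<le> EQ M Zc X) \<and>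
     (AE \<omega> in M. W \<omega> \<le> (1 + 1 / real (Suc k)) * Zc \<omega> \<and> Zc \<omega> \<le> (1 + 1 / real (Suc k)) * W \<omega>)"
  proof
    fix k
    have "1 < 1 + 1 / real (Suc k)" by simp
    then show "\<exists>Zc\<in>borel_measurable M. (\<forall>X\<in>borel_measurable M. u X \<le> EQ M Zc X) \<and>
     (AE \<omega> in M. W \<omega> \<le> (1 + 1 / real (Suc k)) * Zc \<omega> \<and> Zc \<omega> \<le> (1 + 1 / real (Suc k)) * W \<omega>)"
      using band_approx[OF P atl li Zd subF WF Wint Wpos tower, of "1 + 1 / real (Suc k)"] by blast
  qed
  then obtain Zk where Zkm: "\<And>k. Zk k \<in> borel_measurable M"
    and Zku: "\<And>k X. X \<in> borel_measurable M \<Longrightarrow> u X \<le> EQ M (Zk k) X"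
    and Zkb: "\<And>k. AE \<omega> in M. W \<omega> \<le> (1 + 1 / real (Suc k)) * Zk k \<omega> \<and> Zk k \<omega> \<le> (1 + 1 / real (Suc k)) * W \<omega>"
    by metis
  have "u X \<le> EQ M W X" if X: "X \<in> borel_measurable M" for X
    by (rule EQ_approx[OF Wm Zkm X Zkb Zku[OF X]])
  then show ?thesis using Wden by (auto simp: determining_set_def)
qed

lemma EQ_cong_AE:
  assumes "AE \<omega> in M. Q1 \<omega> = Q2 \<omega>"
  shows "EQ M Q1 X = EQ M Q2 X"
proof -
  have "(\<integral>\<^sup>+\<omega>. ennreal (Q1 \<omega> * max (X \<omega>) 0) \<partial>M) = (\<integral>\<^sup>+\<omega>. ennreal (Q2 \<omega> * max (X \<omega>) 0) \<partial>M)"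
    using assms by (intro nn_integral_cong_AE) (auto elim!: eventually_mono)
  moreover have "(\<integral>\<^sup>+\<omega>. ennreal (Q1 \<omega> * max (- X \<omega>) 0) \<partial>M) = (\<integral>\<^sup>+\<omega>. ennreal (Q2 \<omega> * max (- X \<omega>) 0) \<partial>M)"
    using assms by (intro nn_integral_cong_AE) (auto elim!: eventually_mono)
  ultimately show ?thesis unfolding EQ_def Let_def by simp
qed

lemma gen_sigma_sets:
  assumes "Y \<in> borel_measurable M"
  shows "sets (gen_sigma M Y) = {Y -` A \<inter> space M | A. A \<in> sets borel}"
  unfolding gen_sigma_def by (rule sets_vimage_algebra2) auto

lemma gen_sigma_sub:
  assumes "Y \<in> borel_measurable M"
  shows "subalgebra M (gen_sigma M Y)"
proof -
  have "space (gen_sigma M Y) = space M" by (simp add: gen_sigma_def)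
  moreover have "sets (gen_sigma M Y) \<subseteq> sets M" using assms by (auto simp: gen_sigma_sets)
  ultimately show ?thesis unfolding subalgebra_def by blast
qed

theorem theorem3p7:
  fixes M :: "'a measure" and u :: "('a \<Rightarrow> real) \<Rightarrow> ereal"
    and D :: "('a \<Rightarrow> real) set"
    and X :: "'a \<Rightarrow> real" and Y :: "'a \<Rightarrow> 'b::euclidean_space"
    and Y' :: "'a \<Rightarrow> 'c::euclidean_space"
  assumes "prob_space M" and "atomless M"
    and "coherent_utility M u" and "law_invariant M u"
    and "D = determining_set M u"
    and "X \<in> borel_measurable M"
    and "Y \<in> borel_measurable M" and "Y' \<in> borel_measurable M"
  shows "factor_utility M D X (\<lambda>\<omega>. (Y \<omega>, Y' \<omega>)) \<le> factor_utility M D X Y"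
proof -
  note P = assms(1) and atl = assms(2) and li = assms(4) and DD = assms(5)
    and Ym = assms(7) and Y'm = assms(8)
  interpret prob_space M by fact
  define YY where "YY = (\<lambda>\<omega>. (Y \<omega>, Y' \<omega>))"
  have YYm: "YY \<in> borel_measurable M" unfolding YY_def using Ym Y'm by measurable
  define F1 where "F1 = gen_sigma M Y"
  define F2 where "F2 = gen_sigma M YY"
  interpret S1: finite_measure_subalgebra M F1
    unfolding F1_def by unfold_locales (rule gen_sigma_sub[OF Ym])
  interpret S2: finite_measure_subalgebra M F2
    unfolding F2_def by unfold_locales (rule gen_sigma_sub[OF YYm])
  have sub12: "sets F1 \<subseteq> sets F2"
  proof
    fix S assume "S \<in> sets F1"
    then obtain A where A: "A \<in> sets borel" "S = Y -` A \<inter> space M"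
      unfolding F1_def gen_sigma_sets[OF Ym] by blast
    have "A \<times> (UNIV :: 'c set) \<in> sets (borel \<Otimes>\<^sub>M (borel :: 'c measure))" using A by (intro pair_measureI) auto
    then have AU: "A \<times> (UNIV :: 'c set) \<in> sets (borel :: ('b \<times> 'c) measure)" by (simp only: borel_prod)
    have "S = YY -` (A \<times> UNIV) \<inter> space M" using A by (auto simp: YY_def)
    then show "S \<in> sets F2" unfolding F2_def gen_sigma_sets[OF YYm] using AU by blast
  qed
  have sp1: "space F1 = space M" "space F2 = space M" by (simp_all add: F1_def F2_def gen_sigma_def)
  have key: "factor_utility M D X YY \<le> EQ M (real_cond_exp M F1 Z) X" if Z: "Z \<in> D" for Z
  proof -
    have Zd: "Z \<in> determining_set M u" using Z DD by simp
    have Zden: "Z \<in> densities M" using Zd by (simp add: determining_set_def)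
    have Zm: "Z \<in> borel_measurable M" and Zpos: "AE \<omega> in M. 0 \<le> Z \<omega>" and Zint: "integrable M Z"
      and Z1: "integral\<^sup>L M Z = 1" using Zden by (auto simp: densities_def)
    define W where "W = real_cond_exp M F1 Z"
    have WF: "W \<in> borel_measurable F1" unfolding W_def by simp
    have Wden: "W \<in> densities M"
      unfolding densities_def W_def using S1.real_cond_exp_pos[OF Zpos Zm] S1.real_cond_exp_int[OF Zint] Z1
      by auto
    have tower: "(\<integral>\<omega>. Z \<omega> * indicator B \<omega> \<partial>M) = (\<integral>\<omega>. W \<omega> * indicator B \<omega> \<partial>M)" if B: "B \<in> sets F1" for B
      using S1.real_cond_exp_intA[OF Zint B] unfolding W_def set_lebesgue_integral_def
      by (simp add: mult.commute)
    have subF: "sets F1 \<subseteq> sets M" "space F1 = space M"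
      using S1.subalg by (auto simp: subalgebra_def)
    have WD: "W \<in> D" using W_in_D[OF P atl li Zd subF WF Wden tower] DD by simp
    have WF2: "W \<in> borel_measurable F2"
      using WF measurable_mono[of borel borel F1 F2] sub12 sp1 by auto
    have Wint: "integrable M W" using Wden by (simp add: densities_def)
    have "AE \<omega> in M. real_cond_exp M F2 W \<omega> = W \<omega>" by (rule S2.real_cond_exp_F_meas[OF Wint WF2])
    then have eq: "EQ M (real_cond_exp M F2 W) X = EQ M W X" by (rule EQ_cong_AE)
    have "factor_utility M D X YY \<le> EQ M (real_cond_exp M F2 W) X"
      unfolding factor_utility_def F2_def[symmetric] using WD by (intro INF_lower2[of "real_cond_exp M F2 W"]) auto
    then show ?thesis using eq by (simp add: W_def)
  qed
  have "factor_utility M D X YY \<le> factor_utility M D X Y"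
    unfolding factor_utility_def[of M D X Y] F1_def[symmetric]
    by (rule INF_greatest) (use key in auto)
  then show ?thesis by (simp add: YY_def)
qed

end
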